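(* Let $(e_1^{(1)},e_1^{(2)}),(e_2^{(1)},e_2^{(2)}),\dots$ be i.i.d. real random pairs with mean zero, independently adapted to a filtration $\{\mathcal F_n\}$, let $\zeta_n^{(j)}=\sum_{i=1}^ne_i^{(j)}$ for $j=1,2$, and let $t$ be a stopping time with respect to $\{\mathcal F_n\}$. If $E|e_1^{(1)}|^{3/2}<\infty$, $E|e_1^{(2)}|^3<\infty$ and $Et^{3/2}<\infty$, then $E\zeta_t^{(1)}\zeta_t^{(2)}=Et\,Ee_1^{(1)}e_1^{(2)}$.
   Context: A sequence $\{e_n\}$ is independently adapted to $\{\mathcal F_n\}$ if for each $n\ge1$, $e_n$ is $\mathcal F_n$-measurable and independent of $\mathcal F_{n-1}$. *)

theory Defs
  imports "HOL-Probability.Probability"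
begin

definition indep_adapted ::
  "'a measure \<Rightarrow> (nat \<Rightarrow> 'a measure) \<Rightarrow> (nat \<Rightarrow> 'a \<Rightarrow> real \<times> real) \<Rightarrow> bool" where
  "indep_adapted M F e \<longleftrightarrow>
     (\<forall>n\<ge>1. e n \<in> borel_measurable (F n) \<and>
        prob_space.indep_set M (sets (F (n - 1)))
          {e n -` A \<inter> space M | A. A \<in> sets borel})"

definition psum :: "(nat \<Rightarrow> 'a \<Rightarrow> real) \<Rightarrow> nat \<Rightarrow> 'a \<Rightarrow> real" where
  "psum e n x = (\<Sum>i=1..n. e i x)"

end

theory Submission
  imports Defs
begin

lemma (in prob_space) indep_mult_gen:
  fixes Y :: "'a \<Rightarrow> real" and Z :: "'a \<Rightarrow> real \<times> real" and f :: "real \<times> real \<Rightarrow> real"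
  assumes ind: "indep_set (sets N) {Z -` A \<inter> space M | A. A \<in> sets borel}"
    and sub: "sets N \<subseteq> sets M" "space N = space M"
    and Y: "Y \<in> borel_measurable N"
    and Z: "Z \<in> borel_measurable M"
    and f: "f \<in> borel_measurable borel"
    and iY: "integrable M Y" and iZ: "integrable M (\<lambda>x. f (Z x))"
  shows "integrable M (\<lambda>x. Y x * f (Z x))"
    and "(\<integral>x. Y x * f (Z x) \<partial>M) = (\<integral>x. Y x \<partial>M) * (\<integral>x. f (Z x) \<partial>M)"
proof -
  have YM: "Y \<in> borel_measurable M"
    using Y sub unfolding measurable_def by auto
  have iv: "indep_var borel Y borel (\<lambda>x. f (Z x))"
    unfolding indep_var_def indep_vars_def2
  proof (intro conjI ballI)
    fix i :: bool show "random_variable (case_bool borel borel i) (case_bool Y (\<lambda>x. f (Z x)) i)"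
      using YM Z f by (cases i) auto
  next
    show "indep_sets (\<lambda>i. {case_bool Y (\<lambda>x. f (Z x)) i -` A \<inter> space M |A. A \<in> sets (case_bool borel borel i)}) UNIV"
    proof (rule indep_sets_mono_sets[OF ind[unfolded indep_set_def]])
      fix i :: bool
      show "{case_bool Y (\<lambda>x. f (Z x)) i -` A \<inter> space M |A. A \<in> sets (case_bool borel borel i)}
            \<subseteq> case_bool (sets N) {Z -` A \<inter> space M |A. A \<in> sets borel} i"
      proof (cases i)
        case True
        then show ?thesis using measurable_sets[OF Y] sub(2) by auto
      next
        case False
        have "\<And>A. A \<in> sets borel \<Longrightarrow> f -` A \<in> sets borel"
          using measurable_sets[OF f] by (metis inf_top.right_neutral space_borel)
        then show ?thesis using False by (auto simp: vimage_def)
      qed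
    qed
  qed
  show "integrable M (\<lambda>x. Y x * f (Z x))"
    by (rule indep_var_integrable[OF iv iY iZ])
  show "(\<integral>x. Y x * f (Z x) \<partial>M) = (\<integral>x. Y x \<partial>M) * (\<integral>x. f (Z x) \<partial>M)"
    by (rule indep_var_lebesgue_integral[OF iv iY iZ])
qed



lemma l1: fixes a b w :: real
  assumes a: "a \<ge> 0" and b: "b \<ge> 0" and w: "w \<ge> 0" and ww: "w^2 = a^2 + b^2"
  shows "w^3 \<le> a^3 + 3/2*a*b^2 + 2*b^3"
proof -
  have e: "(a^3 + 3/2*a*b^2 + 2*b^3)^2 - (w^3)^2 = b^3 * (4*a^3 - 3/4*a^2*b + 6*a*b^2 + 3*b^3)"
  proof -
    have "(w^3)^2 = (w^2)^3" by (simp add: power_mult[symmetric] mult.commute)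
    then show ?thesis unfolding ww by (simp add: algebra_simps power2_eq_square power3_eq_cube)
  qed
  have "0 \<le> (a-b)^2" by simp
  then have "2*a*b \<le> a^2 + b^2" by (simp add: power2_eq_square algebra_simps)
  moreover have "0 \<le> a*b" "0 \<le> a^2" "0 \<le> b^2" using a b by simp_all
  ultimately have "3/4*a*b \<le> 4*a^2 + 6*b^2" by linarith
  then have "0 \<le> a * (4*a^2 - 3/4*a*b + 6*b^2)" using a by simp
  moreover have "4*a^3 - 3/4*a^2*b + 6*a*b^2 + 3*b^3 = a * (4*a^2 - 3/4*a*b + 6*b^2) + 3*b^3"
    by algebra
  moreover have "0 \<le> b^3" using b by simp
  ultimately have "0 \<le> 4*a^3 - 3/4*a^2*b + 6*a*b^2 + 3*b^3" by linarith
  then have "0 \<le> b^3 * (4*a^3 - 3/4*a^2*b + 6*a*b^2 + 3*b^3)" using b by simp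
  then have h1: "(w^3)^2 \<le> (a^3 + 3/2*a*b^2 + 2*b^3)^2" using e by linarith
  have h2: "0 \<le> a^3 + 3/2*a*b^2 + 2*b^3" using a b by simp
  show ?thesis using h1 h2 by (rule power2_le_imp_le)
qed

lemma l2: fixes a b w :: real
  assumes a: "a \<ge> b" and b: "b \<ge> 0" and w: "w \<ge> 0" and ww: "w^2 = a^2 - b^2"
  shows "w^3 \<le> a^3 - 3/2*a*b^2 + 2*b^3"
proof -
  define d where "d = a - b"
  have d: "d \<ge> 0" "a = b + d" using a by (auto simp: d_def)
  have w6: "(w^3)^2 = (a^2 - b^2)^3" unfolding ww[symmetric] by (simp add: power_mult[symmetric] mult.commute)
  have e0: "(a^3 - 3/2*a*b^2 + 2*b^3)^2 - (a^2 - b^2)^3 = b^3 * (9/4*b^3 + 9/2*b^2*d + 45/4*b*d^2 + 4*d^3)"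
    unfolding d(2) by algebra
  have e: "(a^3 - 3/2*a*b^2 + 2*b^3)^2 - (w^3)^2 = b^3 * (9/4*b^3 + 9/2*b^2*d + 45/4*b*d^2 + 4*d^3)"
    unfolding w6 by (rule e0)
  have "0 \<le> b^3 * (9/4*b^3 + 9/2*b^2*d + 45/4*b*d^2 + 4*d^3)" using b d by simp
  then have h1: "(w^3)^2 \<le> (a^3 - 3/2*a*b^2 + 2*b^3)^2" using e by linarith
  have "a^3 - 3/2*a*b^2 + 2*b^3 = 3/2*b^3 + 3/2*b^2*d + 3*b*d^2 + d^3"
    unfolding d(2) by algebra
  then have h2: "0 \<le> a^3 - 3/2*a*b^2 + 2*b^3" using b d by simp
  show ?thesis using h1 h2 by (rule power2_le_imp_le)
qed

lemma l3: fixes a b w :: real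
  assumes a: "a \<ge> 0" and b: "b \<ge> a" and w: "w \<ge> 0" and ww: "w^2 = b^2 - a^2"
  shows "w^3 \<le> a^3 - 3/2*a*b^2 + 2*b^3"
proof -
  define d where "d = b - a"
  have d: "d \<ge> 0" "b = a + d" using b by (auto simp: d_def)
  have "w^2 \<le> b^2" using ww by simp
  then have "w \<le> b" using w a b by (meson order_trans power2_le_imp_le)
  then have "w^3 \<le> b^3" using w by (simp add: power_mono)
  moreover have "a^3 - 3/2*a*b^2 + 2*b^3 - b^3 = 1/2*a^3 + 3/2*a*d^2 + d^3"
    unfolding d(2) by (simp add: algebra_simps power2_eq_square power3_eq_cube)
  moreover have "0 \<le> 1/2*a^3 + 3/2*a*d^2 + d^3" using a d by simp
  ultimately show ?thesis by linarith
qed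

definition p15 :: "real \<Rightarrow> real" where "p15 z = \<bar>z\<bar> * sqrt \<bar>z\<bar>"

lemma p15_pos_case: fixes x y :: real assumes x: "x \<ge> 0"
  shows "p15 (x+y) \<le> p15 x + 3/2 * sqrt x * y + 2 * p15 y"
proof -
  define a where "a = sqrt x"
  define b where "b = sqrt \<bar>y\<bar>"
  define w where "w = sqrt \<bar>x+y\<bar>"
  have a0: "a \<ge> 0" and b0: "b \<ge> 0" and w0: "w \<ge> 0" using x by (auto simp: a_def b_def w_def)
  have xa: "x = a^2" using x by (simp add: a_def)
  have yb: "\<bar>y\<bar> = b^2" by (simp add: b_def)
  have wx: "\<bar>x+y\<bar> = w^2" by (simp add: w_def)
  have pw: "p15 (x+y) = w^3" using wx w0 by (simp add: p15_def w_def power3_eq_cube power2_eq_square)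
  have px: "p15 x = a^3" using x by (simp add: p15_def a_def power3_eq_cube power2_eq_square)
  have py: "p15 y = b^3" by (simp add: p15_def b_def power3_eq_cube power2_eq_square)
  show ?thesis
  proof (cases "y \<ge> 0")
    case True
    then have "w^2 = a^2 + b^2" using wx xa yb x by simp
    from l1[OF a0 b0 w0 this] show ?thesis unfolding pw px py a_def[symmetric] using True yb
      by (simp add: algebra_simps)
  next
    case False
    then have y: "y = -(b^2)" using yb by simp
    show ?thesis
    proof (cases "b \<le> a")
      case True
      then have "b^2 \<le> a^2" using b0 by (simp add: power_mono)
      then have "w^2 = a^2 - b^2" using wx xa y by simp
      from l2[OF True b0 w0 this] show ?thesis unfolding pw px py a_def[symmetric]
        by (simp add: y algebra_simps)
    next
      case False
      then have "a^2 \<le> b^2" using a0 by (simp add: power_mono)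
      then have "w^2 = b^2 - a^2" using wx xa y by simp
      from l3[OF a0 _ w0 this] False show ?thesis unfolding pw px py a_def[symmetric]
        by (simp add: y algebra_simps)
    qed
  qed
qed

definition sg15 :: "real \<Rightarrow> real" where "sg15 x = sgn x * sqrt \<bar>x\<bar>"

lemma p15_ineq: fixes x y :: real
  shows "p15 (x+y) \<le> p15 x + 3/2 * sg15 x * y + 2 * p15 y"
proof (cases "x \<ge> 0")
  case True then show ?thesis using p15_pos_case[OF True, of y]
    by (cases "x = 0") (auto simp: sg15_def)
next
  case False
  have "p15 ((-x)+(-y)) \<le> p15 (-x) + 3/2 * sqrt (-x) * (-y) + 2 * p15 (-y)"
    using p15_pos_case[of "-x" "-y"] False by simp
  moreover have "p15 ((-x)+(-y)) = p15 (x+y)" "p15 (-x) = p15 x" "p15 (-y) = p15 y"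
  proof -
    have n: "p15 (-z) = p15 z" for z by (simp add: p15_def)
    show "p15 ((-x)+(-y)) = p15 (x+y)" using n[of "x+y"] by simp
    show "p15 (-x) = p15 x" "p15 (-y) = p15 y" using n by simp_all
  qed
  moreover have "sg15 x = - sqrt (-x)" using False by (simp add: sg15_def)
  ultimately show ?thesis by simp
qed

lemma cube_ineq: fixes x y :: real
  shows "\<bar>x+y\<bar>^3 \<le> \<bar>x\<bar>^3 + 3*x*\<bar>x\<bar>*y + 3*\<bar>x\<bar>*y^2 + 3*\<bar>y\<bar>^3"
proof -
  have pos: "\<bar>x+y\<bar>^3 \<le> \<bar>x\<bar>^3 + 3*x*\<bar>x\<bar>*y + 3*\<bar>x\<bar>*y^2 + 3*\<bar>y\<bar>^3" if x: "x \<ge> 0" for x y :: real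
  proof (cases "x + y \<ge> 0")
    case True
    have "(x+y)^3 = x^3 + 3*x*x*y + 3*x*y^2 + y^3" by (simp add: algebra_simps power2_eq_square power3_eq_cube)
    moreover have "y^3 \<le> 3*\<bar>y\<bar>^3"
    proof -
      have "y^3 \<le> \<bar>y\<bar>^3" by (rule power_mono_odd) auto
      moreover have "0 \<le> \<bar>y\<bar>^3" by simp
      ultimately show ?thesis by linarith
    qed
    ultimately show ?thesis using True x by simp
  next
    case False
    then have y: "y < 0" using x by simp
    have h1: "y^3 \<le> (x+y)^3" using x by (simp add: power_mono_odd)
    have h2: "(x+y)^3 = x^3 + 3*(x^2*y) + 3*(x*y^2) + y^3" by algebra
    have h3: "y^3 < 0" using y power_less_zero_eq[of y 3] by simp
    have h4: "\<bar>x+y\<bar>^3 = -((x+y)^3)" using False by (simp add: power3_eq_cube algebra_simps)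
    have h5: "\<bar>y\<bar>^3 = -(y^3)" using y by (simp add: power3_eq_cube)
    have h6: "3*x*\<bar>x\<bar>*y = 3*(x^2*y)" "3*\<bar>x\<bar>*y^2 = 3*(x*y^2)" "\<bar>x\<bar>^3 = x^3"
      using x by (simp_all add: power2_eq_square)
    show ?thesis unfolding h4 h5 h6 using h1 h2 h3 by linarith
  qed
  show ?thesis
  proof (cases "x \<ge> 0")
    case True then show ?thesis using pos by blast
  next
    case False
    have "\<bar>(-x)+(-y)\<bar>^3 \<le> \<bar>-x\<bar>^3 + 3*(-x)*\<bar>-x\<bar>*(-y) + 3*\<bar>-x\<bar>*(-y)^2 + 3*\<bar>-y\<bar>^3"
      using pos[of "-x" "-y"] False by simp
    moreover have "\<bar>(-x)+(-y)\<bar> = \<bar>x+y\<bar>" by (metis abs_minus_cancel minus_add_distrib)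
    ultimately show ?thesis by simp
  qed
qed



locale wsetup = prob_space M for M :: "'a measure" +
  fixes G :: "nat \<Rightarrow> 'a measure" and P :: "nat \<Rightarrow> 'a \<Rightarrow> real \<times> real" and \<tau> :: "'a \<Rightarrow> nat"
  assumes spaceG: "\<And>n. space (G n) = space M"
  and subG: "\<And>n. sets (G n) \<subseteq> sets M"
  and monoG: "\<And>m n. m \<le> n \<Longrightarrow> sets (G m) \<subseteq> sets (G n)"
  and Pmeas: "\<And>n. 1 \<le> n \<Longrightarrow> P n \<in> borel_measurable (G n)"
  and Pind: "\<And>n. 1 \<le> n \<Longrightarrow> indep_set (sets (G (n-1))) {P n -` A \<inter> space M | A. A \<in> sets borel}"
  and stop: "stopping_time G \<tau>"
begin

definition S :: "(real \<times> real \<Rightarrow> real) \<Rightarrow> nat \<Rightarrow> 'a \<Rightarrow> real" where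
  "S h k x = (\<Sum>j=1..k. if j \<le> \<tau> x then h (P j x) else 0)"

definition ind :: "nat \<Rightarrow> 'a \<Rightarrow> real" where
  "ind k x = (if Suc k \<le> \<tau> x then 1 else 0)"

lemma ind_01: "ind k x = 0 \<or> ind k x = 1" "0 \<le> ind k x" "ind k x \<le> 1"
  by (auto simp: ind_def)

lemma S_0[simp]: "S h 0 x = 0" by (simp add: S_def)

lemma S_Suc: "S h (Suc k) x = S h k x + ind k x * h (P (Suc k) x)"
  by (simp add: S_def ind_def)

lemma meas_GM: "f \<in> measurable (G n) N \<Longrightarrow> f \<in> measurable M N"
proof -
  have "subalgebra M (G n)" by (simp add: subalgebra_def spaceG subG)
  then show "f \<in> measurable (G n) N \<Longrightarrow> f \<in> measurable M N" by (rule measurable_from_subalg)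
qed

lemma meas_mono: "m \<le> n \<Longrightarrow> f \<in> measurable (G m) N \<Longrightarrow> f \<in> measurable (G n) N"
  using spaceG[of m] spaceG[of n] monoG[of m n] unfolding measurable_def by auto

lemma pred_le: "1 \<le> j \<Longrightarrow> j - 1 \<le> k \<Longrightarrow> Measurable.pred (G k) (\<lambda>x. j \<le> \<tau> x)"
proof -
  assume j: "1 \<le> j" "j - 1 \<le> k"
  have "Measurable.pred (G (j-1)) (\<lambda>x. j - 1 < \<tau> x)" by (rule stopping_timeD2[OF stop])
  moreover have "(\<lambda>x. j - 1 < \<tau> x) = (\<lambda>x. j \<le> \<tau> x)" using j by auto
  ultimately show ?thesis using meas_mono[OF j(2)] by simp
qed

lemma ind_meas: "ind k \<in> borel_measurable (G k)"
proof -
  have "Measurable.pred (G k) (\<lambda>x. Suc k \<le> \<tau> x)" by (rule pred_le) auto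
  then show ?thesis unfolding ind_def by measurable
qed

lemma ind_measM: "ind k \<in> borel_measurable M"
  using meas_GM[OF ind_meas] .

lemma tau_meas: "\<tau> \<in> measurable M (count_space UNIV)"
proof -
  have "\<tau> \<in> M \<rightarrow>\<^sub>M borel"
    by (rule measurable_stopping_time[OF stop subG spaceG])
  moreover have "measurable M borel = measurable M (count_space UNIV :: nat measure)"
    by (rule measurable_cong_sets[OF refl sets_borel_eq_count_space])
  ultimately show ?thesis by simp
qed

lemma min_meas: "(\<lambda>x. real (min (\<tau> x) n)) \<in> borel_measurable M"
  using tau_meas by measurable

lemma hP_meas: "h \<in> borel_measurable borel \<Longrightarrow> 1 \<le> j \<Longrightarrow> j \<le> k \<Longrightarrow> (\<lambda>x. h (P j x)) \<in> borel_measurable (G k)"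
  by (rule meas_mono[of j]) (auto intro: measurable_compose[OF Pmeas])

lemma hP_measM: "h \<in> borel_measurable borel \<Longrightarrow> 1 \<le> j \<Longrightarrow> (\<lambda>x. h (P j x)) \<in> borel_measurable M"
  using meas_GM hP_meas[of h j j] by auto

lemma S_meas: "h \<in> borel_measurable borel \<Longrightarrow> S h k \<in> borel_measurable (G k)"
proof -
  assume h: "h \<in> borel_measurable borel"
  have "(\<lambda>x. if j \<le> \<tau> x then h (P j x) else 0) \<in> borel_measurable (G k)" if j: "j \<in> {1..k}" for j
  proof -
    have "Measurable.pred (G k) (\<lambda>x. j \<le> \<tau> x)" using j by (intro pred_le) auto
    moreover have "(\<lambda>x. h (P j x)) \<in> borel_measurable (G k)" using j h by (intro hP_meas) auto
    ultimately show ?thesis by measurable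
  qed
  then show ?thesis unfolding S_def[abs_def] by (intro borel_measurable_sum) auto
qed

lemma S_measM: "h \<in> borel_measurable borel \<Longrightarrow> S h k \<in> borel_measurable M"
  using meas_GM[OF S_meas] .

lemma min_Suc: "real (min (\<tau> x) (Suc k)) = real (min (\<tau> x) k) + ind k x"
  by (auto simp: ind_def)

lemma indep_step:
  fixes f :: "real \<times> real \<Rightarrow> real"
  assumes Y: "Y \<in> borel_measurable (G k)" "integrable M Y"
    and f: "f \<in> borel_measurable borel" "integrable M (\<lambda>x. f (P (Suc k) x))"
  shows "integrable M (\<lambda>x. ind k x * Y x * f (P (Suc k) x))"
    and "(\<integral>x. ind k x * Y x * f (P (Suc k) x) \<partial>M) = (\<integral>x. ind k x * Y x \<partial>M) * (\<integral>x. f (P (Suc k) x) \<partial>M)"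
proof -
  have m: "(\<lambda>x. ind k x * Y x) \<in> borel_measurable (G k)"
    by (rule borel_measurable_times[OF ind_meas Y(1)])
  have i: "integrable M (\<lambda>x. ind k x * Y x)"
  proof (rule Bochner_Integration.integrable_bound[OF Y(2)])
    show "(\<lambda>x. ind k x * Y x) \<in> borel_measurable M" using meas_GM[OF m] .
    show "AE x in M. norm (ind k x * Y x) \<le> norm (Y x)"
    proof (rule AE_I2)
      fix x show "norm (ind k x * Y x) \<le> norm (Y x)"
        using ind_01(1)[of k x] by auto
    qed
  qed
  have PM: "P (Suc k) \<in> borel_measurable M" using meas_GM Pmeas[of "Suc k"] by simp
  have ind: "indep_set (sets (G k)) {P (Suc k) -` A \<inter> space M |A. A \<in> sets borel}"
    using Pind[of "Suc k"] by simp
  note r = indep_mult_gen[OF ind subG spaceG m PM f(1) i f(2)]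
  show "integrable M (\<lambda>x. ind k x * Y x * f (P (Suc k) x))" using r(1) .
  show "(\<integral>x. ind k x * Y x * f (P (Suc k) x) \<partial>M) = (\<integral>x. ind k x * Y x \<partial>M) * (\<integral>x. f (P (Suc k) x) \<partial>M)"
    using r(2) .
qed

end


lemma p15_nonneg[simp]: "0 \<le> p15 z" by (simp add: p15_def)
lemma p15_0[simp]: "p15 0 = 0" by (simp add: p15_def)
lemma p15_meas[measurable]: "p15 \<in> borel_measurable borel"
  unfolding p15_def[abs_def] by measurable
lemma sg15_meas[measurable]: "sg15 \<in> borel_measurable borel"
  unfolding sg15_def[abs_def] by measurable
lemma sg15_bound: "\<bar>sg15 z\<bar> \<le> 1 + p15 z"
proof -
  have a: "\<bar>sg15 z\<bar> \<le> sqrt \<bar>z\<bar>"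
    by (cases "z > 0"; cases "z < 0") (auto simp: sg15_def)
  show ?thesis
  proof (cases "\<bar>z\<bar> \<le> 1")
    case True
    then have "sqrt \<bar>z\<bar> \<le> 1" by simp
    then show ?thesis using a p15_nonneg[of z] by linarith
  next
    case False
    then have "sqrt \<bar>z\<bar> \<le> \<bar>z\<bar> * sqrt \<bar>z\<bar>" by (simp add: mult_le_cancel_right1)
    then show ?thesis using a unfolding p15_def by linarith
  qed
qed

lemma p15_ind: "(c::real) = 0 \<or> c = 1 \<Longrightarrow> p15 (c * y) = c * p15 y"
  by auto

context wsetup begin

lemma ind_int: "integrable M (ind k)"
  by (rule integrable_const_bound[where B=1]) (use ind_01 ind_measM in auto)

lemma min_int: "integrable M (\<lambda>x. real (min (\<tau> x) n))"
  by (rule integrable_const_bound[where B="real n"]) (use min_meas in auto)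

lemma A_fin:
  assumes hm: "h \<in> borel_measurable borel"
  and i1: "\<And>j. 1 \<le> j \<Longrightarrow> integrable M (\<lambda>x. h (P j x))"
  and m0: "\<And>j. 1 \<le> j \<Longrightarrow> (\<integral>x. h (P j x) \<partial>M) = 0"
  and ip: "\<And>j. 1 \<le> j \<Longrightarrow> integrable M (\<lambda>x. p15 (h (P j x)))"
  and mp: "\<And>j. 1 \<le> j \<Longrightarrow> (\<integral>x. p15 (h (P j x)) \<partial>M) \<le> c"
  shows "integrable M (\<lambda>x. p15 (S h n x)) \<and> (\<integral>x. p15 (S h n x) \<partial>M) \<le> 2 * c * (\<integral>x. real (min (\<tau> x) n) \<partial>M)"
proof (induction n)
  case 0
  then show ?case by simp
next
  case (Suc k)
  have IHi: "integrable M (\<lambda>x. p15 (S h k x))" and IHb: "(\<integral>x. p15 (S h k x) \<partial>M) \<le> 2 * c * (\<integral>x. real (min (\<tau> x) k) \<partial>M)"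
    using Suc by auto
  define X where "X x = h (P (Suc k) x)" for x
  have Xi: "integrable M X" unfolding X_def using i1 by simp
  have pw: "p15 (S h (Suc k) x) \<le> p15 (S h k x) + 3/2 * (ind k x * sg15 (S h k x) * X x) + 2 * (ind k x * 1 * p15 (X x))" for x
  proof -
    have "p15 (S h k x + ind k x * X x) \<le> p15 (S h k x) + 3/2 * sg15 (S h k x) * (ind k x * X x) + 2 * p15 (ind k x * X x)"
      by (rule p15_ineq)
    moreover have "p15 (ind k x * X x) = ind k x * p15 (X x)" using ind_01(1) by (rule p15_ind)
    ultimately show ?thesis unfolding S_Suc X_def by (simp add: algebra_simps)
  qed
  have Sm: "S h k \<in> borel_measurable (G k)" using S_meas[OF hm] .
  have Ym: "(\<lambda>x. sg15 (S h k x)) \<in> borel_measurable (G k)"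
    using measurable_compose[OF Sm sg15_meas] by (simp add: comp_def)
  have Yi: "integrable M (\<lambda>x. sg15 (S h k x))"
  proof (rule Bochner_Integration.integrable_bound[where f="\<lambda>x. 1 + p15 (S h k x)"])
    show "integrable M (\<lambda>x. 1 + p15 (S h k x))" using IHi by simp
    show "(\<lambda>x. sg15 (S h k x)) \<in> borel_measurable M" using meas_GM[OF Ym] .
    show "AE x in M. norm (sg15 (S h k x)) \<le> norm (1 + p15 (S h k x))"
    proof (rule AE_I2)
      fix x show "norm (sg15 (S h k x)) \<le> norm (1 + p15 (S h k x))"
        using sg15_bound[of "S h k x"] p15_nonneg[of "S h k x"] by simp
    qed
  qed
  note I2 = indep_step[OF Ym Yi hm i1[of "Suc k"], folded X_def]
  have c1m: "(\<lambda>x. 1::real) \<in> borel_measurable (G k)" by simp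
  have pXi: "integrable M (\<lambda>x. p15 (h (P (Suc k) x)))" using ip by simp
  have pfm: "(\<lambda>a. p15 (h a)) \<in> borel_measurable borel" using hm by measurable
  note I3 = indep_step[OF c1m _ pfm pXi, simplified, folded X_def]
  have m0': "integral\<^sup>L M X = 0" unfolding X_def using m0 by simp
  have indE: "0 \<le> integral\<^sup>L M (ind k)" using ind_01 by (simp add: integral_nonneg_AE)
  have pE: "(\<integral>x. p15 (X x) \<partial>M) \<le> c" unfolding X_def using mp by simp
  have ri: "integrable M (\<lambda>x. p15 (S h k x) + 3/2 * (ind k x * sg15 (S h k x) * X x) + 2 * (ind k x * 1 * p15 (X x)))"
    using IHi I2(1) I3(1) by simp
  have Si: "integrable M (\<lambda>x. p15 (S h (Suc k) x))"
  proof (rule Bochner_Integration.integrable_bound[OF ri])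
    show "(\<lambda>x. p15 (S h (Suc k) x)) \<in> borel_measurable M"
      using measurable_compose[OF S_measM[OF hm] p15_meas] by (simp add: comp_def)
    show "AE x in M. norm (p15 (S h (Suc k) x)) \<le> norm (p15 (S h k x) + 3/2 * (ind k x * sg15 (S h k x) * X x) + 2 * (ind k x * 1 * p15 (X x)))"
    proof (rule AE_I2)
      fix x show "norm (p15 (S h (Suc k) x)) \<le> norm (p15 (S h k x) + 3/2 * (ind k x * sg15 (S h k x) * X x) + 2 * (ind k x * 1 * p15 (X x)))"
        using pw[of x] p15_nonneg[of "S h (Suc k) x"] by simp
    qed
  qed
  have "(\<integral>x. p15 (S h (Suc k) x) \<partial>M) \<le> (\<integral>x. p15 (S h k x) + 3/2 * (ind k x * sg15 (S h k x) * X x) + 2 * (ind k x * 1 * p15 (X x)) \<partial>M)"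
    by (rule integral_mono[OF Si ri pw])
  also have "\<dots> = (\<integral>x. p15 (S h k x) \<partial>M) + 3/2 * (\<integral>x. ind k x * sg15 (S h k x) * X x \<partial>M) + 2 * (\<integral>x. ind k x * 1 * p15 (X x) \<partial>M)"
    using IHi I2(1) I3(1) by simp
  also have "\<dots> = (\<integral>x. p15 (S h k x) \<partial>M) + 2 * ((\<integral>x. ind k x \<partial>M) * (\<integral>x. p15 (X x) \<partial>M))"
    using I2(2) I3(2) m0' by simp
  also have "\<dots> \<le> 2 * c * (\<integral>x. real (min (\<tau> x) k) \<partial>M) + 2 * ((\<integral>x. ind k x \<partial>M) * c)"
    using IHb mult_left_mono[OF pE indE] by simp
  also have "\<dots> = 2 * c * (\<integral>x. real (min (\<tau> x) (Suc k)) \<partial>M)"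
    unfolding min_Suc using min_int ind_int by (simp add: algebra_simps)
  finally show ?case using Si by simp
qed

end


lemma cube_sum_bound: "\<bar>a + b\<bar>^3 \<le> 4 * (\<bar>a\<bar>^3 + \<bar>b\<bar>^3)" for a b :: real
proof -
  define u v where "u = \<bar>a\<bar>" and "v = \<bar>b\<bar>"
  have uv: "u \<ge> 0" "v \<ge> 0" by (auto simp: u_def v_def)
  have "\<bar>a + b\<bar> \<le> u + v" by (simp add: u_def v_def abs_triangle_ineq)
  then have "\<bar>a + b\<bar>^3 \<le> (u + v)^3" by (simp add: power_mono)
  moreover have "4 * (u^3 + v^3) - (u+v)^3 = 3 * (u+v) * (u-v)^2" by algebra
  moreover have "0 \<le> 3 * (u+v) * (u-v)^2" using uv by simp
  ultimately show ?thesis unfolding u_def v_def by linarith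
qed

lemma young3: fixes u v d :: real assumes "u \<ge> 0" "v \<ge> 0" "d > 0"
  shows "u^2 * v \<le> d * u^3 + v^3 / d^2"
proof (cases "v \<le> d * u")
  case True
  then have "u^2 * v \<le> u^2 * (d * u)" by (simp add: mult_left_mono)
  moreover have "0 \<le> v^3 / d^2" using assms by simp
  ultimately show ?thesis by (simp add: power3_eq_cube power2_eq_square algebra_simps)
next
  case False
  then have "u \<le> v / d" using assms by (simp add: field_simps)
  then have "u^2 \<le> (v/d)^2" using assms by (simp add: power_mono)
  then have "u^2 * v \<le> (v/d)^2 * v" using assms by (simp add: mult_right_mono)
  moreover have "(v/d)^2 * v = v^3 / d^2" by (simp add: power2_eq_square power3_eq_cube)
  moreover have "0 \<le> d * u^3" using assms by simp
  ultimately show ?thesis by linarith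
qed

lemma sq_le_cube: "z^2 \<le> 1 + \<bar>z\<bar>^3" for z :: real
proof (cases "\<bar>z\<bar> \<le> 1")
  case True
  then have "\<bar>z\<bar>^2 \<le> 1^2" by (intro power_mono) auto
  then have "z^2 \<le> 1" by simp
  moreover have "0 \<le> \<bar>z\<bar>^3" by simp
  ultimately show ?thesis by linarith
next
  case False
  have "\<bar>z\<bar>^2 \<le> \<bar>z\<bar>^3" by (rule power_increasing) (use False in auto)
  then show ?thesis by simp
qed

lemma abs_le_cube: "\<bar>z\<bar> \<le> 1 + \<bar>z\<bar>^3" for z :: real
proof (cases "\<bar>z\<bar> \<le> 1")
  case True
  moreover have "0 \<le> \<bar>z\<bar>^3" by simp
  ultimately show ?thesis by linarith
next
  case False
  have "\<bar>z\<bar>^1 \<le> \<bar>z\<bar>^3" by (rule power_increasing) (use False in auto)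
  then show ?thesis by simp
qed

lemma diff_sq: "(x - y) * (x + y) = x^2 - y^2" for x y :: real by algebra

lemma sqrt_diff: fixes k :: nat
  defines "a \<equiv> sqrt (real (Suc k)) - sqrt (real k)"
  shows "a > 0" and "\<bar>z\<bar> \<le> a * z^2 + 2 * sqrt (real (Suc k))"
proof -
  have lt: "sqrt (real k) < sqrt (real (Suc k))" by simp
  then show "a > 0" by (simp add: a_def)
  define b where "b = sqrt (real (Suc k)) + sqrt (real k)"
  have prod: "a * b = 1"
    unfolding a_def b_def diff_sq by simp
  have bb: "b \<le> 2 * sqrt (real (Suc k))" using lt by (simp add: b_def)
  show "\<bar>z\<bar> \<le> a * z^2 + 2 * sqrt (real (Suc k))"
  proof (cases "\<bar>z\<bar> \<le> b")
    case True
    moreover have "0 \<le> a * z^2" using \<open>a > 0\<close> by simp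
    ultimately show ?thesis using bb by linarith
  next
    case False
    then have "a * b \<le> a * \<bar>z\<bar>" using \<open>a > 0\<close> by (intro mult_left_mono) auto
    then have "1 \<le> a * \<bar>z\<bar>" using prod by simp
    then have "1 * \<bar>z\<bar> \<le> (a * \<bar>z\<bar>) * \<bar>z\<bar>" by (intro mult_right_mono) auto
    then have "\<bar>z\<bar> \<le> a * z^2" by (simp add: power2_eq_square mult.assoc)
    moreover have "0 \<le> 2 * sqrt (real (Suc k))" by simp
    ultimately show ?thesis by linarith
  qed
qed



lemma step_ineq: fixes u X cc r q :: real
  shows "\<bar>u+X\<bar>^3 - 3*cc*r*(u+X)^2 \<le> \<bar>u\<bar>^3 - 3*cc*q*u^2 + 3*(u*\<bar>u\<bar>*X) + 3*(\<bar>u\<bar>*X^2) + 3*\<bar>X\<bar>^3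
      - 6*cc*r*(u*X) - 3*cc*r*X^2 - 3*cc*(r-q)*u^2"
proof -
  have c: "\<bar>u+X\<bar>^3 \<le> \<bar>u\<bar>^3 + 3*u*\<bar>u\<bar>*X + 3*\<bar>u\<bar>*X^2 + 3*\<bar>X\<bar>^3" by (rule cube_ineq)
  have e1: "3*cc*r*(u+X)^2 = 3*cc*r*u^2 + 6*cc*r*(u*X) + 3*cc*r*X^2" by algebra
  have e2: "3*cc*(r-q)*u^2 = 3*cc*r*u^2 - 3*cc*q*u^2" by algebra
  have e3: "3*u*\<bar>u\<bar>*X = 3*(u*\<bar>u\<bar>*X)" "3*\<bar>u\<bar>*X^2 = 3*(\<bar>u\<bar>*X^2)" by simp_all
  show ?thesis using c e1 e2 e3 by linarith
qed

context wsetup begin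

lemmas [measurable] = tau_meas

lemma ind_mult_int: "integrable M Y \<Longrightarrow> integrable M (\<lambda>x. ind k x * Y x)"
proof -
  assume Y: "integrable M Y"
  show ?thesis
  proof (rule Bochner_Integration.integrable_bound[OF Y])
    show "(\<lambda>x. ind k x * Y x) \<in> borel_measurable M"
      using borel_measurable_times[OF ind_measM borel_measurable_integrable[OF Y]] .
    show "AE x in M. norm (ind k x * Y x) \<le> norm (Y x)"
    proof (rule AE_I2)
      fix x show "norm (ind k x * Y x) \<le> norm (Y x)"
        using ind_01(1)[of k x] by auto
    qed
  qed
qed

lemma B_int:
  assumes hm: "h \<in> borel_measurable borel"
  and i3: "\<And>j. 1 \<le> j \<Longrightarrow> integrable M (\<lambda>x. \<bar>h (P j x)\<bar>^3)"
  shows "integrable M (\<lambda>x. \<bar>S h n x\<bar>^3)"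
proof (induction n)
  case 0
  then show ?case by simp
next
  case (Suc k)
  have ri: "integrable M (\<lambda>x. 4 * (\<bar>S h k x\<bar>^3 + ind k x * \<bar>h (P (Suc k) x)\<bar>^3))"
    using Suc ind_mult_int[OF i3[of "Suc k"]] by simp
  show ?case
  proof (rule Bochner_Integration.integrable_bound[OF ri])
    show "(\<lambda>x. \<bar>S h (Suc k) x\<bar>^3) \<in> borel_measurable M"
      using S_measM[OF hm, of "Suc k"] by measurable
    show "AE x in M. norm (\<bar>S h (Suc k) x\<bar>^3) \<le> norm (4 * (\<bar>S h k x\<bar>^3 + ind k x * \<bar>h (P (Suc k) x)\<bar>^3))"
    proof (rule AE_I2)
      fix x
      have "\<bar>S h (Suc k) x\<bar>^3 \<le> 4 * (\<bar>S h k x\<bar>^3 + \<bar>ind k x * h (P (Suc k) x)\<bar>^3)"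
        unfolding S_Suc by (rule cube_sum_bound)
      moreover have "\<bar>ind k x * h (P (Suc k) x)\<bar>^3 = ind k x * \<bar>h (P (Suc k) x)\<bar>^3"
        using ind_01(1)[of k x] by auto
      ultimately show "norm (\<bar>S h (Suc k) x\<bar>^3) \<le> norm (4 * (\<bar>S h k x\<bar>^3 + ind k x * \<bar>h (P (Suc k) x)\<bar>^3))"
        by simp
    qed
  qed
qed

definition W :: "(real \<times> real \<Rightarrow> real) \<Rightarrow> nat \<Rightarrow> 'a \<Rightarrow> real" where
  "W h k x = sqrt (real (min (\<tau> x) k)) * (S h k x)^2"

definition mm :: "nat \<Rightarrow> 'a \<Rightarrow> real" where
  "mm k x = real (min (\<tau> x) k) * sqrt (real (min (\<tau> x) k))"

lemma mm_meas: "mm k \<in> borel_measurable M"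
  unfolding mm_def[abs_def] by measurable

lemma mm_int: "integrable M (mm k)"
proof (rule integrable_const_bound[where B="real k * sqrt (real k)"])
  show "AE x in M. norm (mm k x) \<le> real k * sqrt (real k)"
  proof (rule AE_I2)
    fix x show "norm (mm k x) \<le> real k * sqrt (real k)"
      unfolding mm_def by (auto intro!: mult_mono)
  qed
qed (rule mm_meas)

lemma mm_nonneg: "0 \<le> mm k x" by (simp add: mm_def)

lemma W_int:
  assumes hm: "h \<in> borel_measurable borel"
  and i3: "\<And>j. 1 \<le> j \<Longrightarrow> integrable M (\<lambda>x. \<bar>h (P j x)\<bar>^3)"
  shows "integrable M (W h k)"
proof -
  have ri: "integrable M (\<lambda>x. sqrt (real k) * (1 + \<bar>S h k x\<bar>^3))"
    using B_int[OF hm i3, of k] by simp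
  show ?thesis
  proof (rule Bochner_Integration.integrable_bound[OF ri])
    show "W h k \<in> borel_measurable M"
      unfolding W_def[abs_def] using S_measM[OF hm, of k] by measurable
    show "AE x in M. norm (W h k x) \<le> norm (sqrt (real k) * (1 + \<bar>S h k x\<bar>^3))"
    proof (rule AE_I2)
      fix x
      have "sqrt (real (min (\<tau> x) k)) * (S h k x)^2 \<le> sqrt (real k) * (1 + \<bar>S h k x\<bar>^3)"
        by (intro mult_mono sq_le_cube) auto
      then show "norm (W h k x) \<le> norm (sqrt (real k) * (1 + \<bar>S h k x\<bar>^3))"
        unfolding W_def by simp
    qed
  qed
qed

end


context wsetup begin

lemma B_phi:
  assumes hm: "h \<in> borel_measurable borel"
  and i1: "\<And>j. 1 \<le> j \<Longrightarrow> integrable M (\<lambda>x. h (P j x))"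
  and m0: "\<And>j. 1 \<le> j \<Longrightarrow> (\<integral>x. h (P j x) \<partial>M) = 0"
  and i2: "\<And>j. 1 \<le> j \<Longrightarrow> integrable M (\<lambda>x. (h (P j x))^2)"
  and m2: "\<And>j. 1 \<le> j \<Longrightarrow> (\<integral>x. (h (P j x))^2 \<partial>M) = vv"
  and i3: "\<And>j. 1 \<le> j \<Longrightarrow> integrable M (\<lambda>x. \<bar>h (P j x)\<bar>^3)"
  and m3: "\<And>j. 1 \<le> j \<Longrightarrow> (\<integral>x. \<bar>h (P j x)\<bar>^3 \<partial>M) \<le> c3"
  shows "(\<integral>x. \<bar>S h n x\<bar>^3 - 3 * vv * W h n x \<partial>M) \<le> (6 * vv + 3 * c3) * (\<integral>x. mm n x \<partial>M)"
proof (induction n)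
  case 0
  then show ?case by (simp add: W_def mm_def)
next
  case (Suc k)
  have v0: "0 \<le> vv"
  proof -
    have "0 \<le> (\<integral>x. (h (P 1 x))^2 \<partial>M)" by (rule integral_nonneg_AE) simp
    moreover have "(\<integral>x. (h (P 1 x))^2 \<partial>M) = vv" by (rule m2) simp
    ultimately show ?thesis by linarith
  qed
  have c30: "0 \<le> c3"
  proof -
    have "0 \<le> (\<integral>x. \<bar>h (P 1 x)\<bar>^3 \<partial>M)" by (rule integral_nonneg_AE) simp
    moreover have "(\<integral>x. \<bar>h (P 1 x)\<bar>^3 \<partial>M) \<le> c3" by (rule m3) simp
    ultimately show ?thesis by linarith
  qed
  define r where "r = sqrt (real (Suc k))"
  define a where "a = sqrt (real (Suc k)) - sqrt (real k)"
  have r1: "1 \<le> r" by (simp add: r_def)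
  have a0: "0 < a" unfolding a_def by (rule sqrt_diff(1))
  define X where "X x = h (P (Suc k) x)" for x
  define s where "s x = S h k x" for x
  define Phi where "Phi n x = \<bar>S h n x\<bar>^3 - 3 * vv * W h n x" for n x
  have Phi_int: "integrable M (Phi n)" for n
    unfolding Phi_def using B_int[OF hm i3] W_int[OF hm i3] by simp
  define RHS where "RHS x = Phi k x + 3 * (ind k x * (s x * \<bar>s x\<bar>) * X x) + 3 * (ind k x * \<bar>s x\<bar> * (X x)^2)
      + 3 * (ind k x * 1 * \<bar>X x\<bar>^3) - 6 * vv * r * (ind k x * s x * X x) - 3 * vv * r * (ind k x * 1 * (X x)^2)
      - 3 * vv * a * (ind k x * (s x)^2)" for x
  have pw: "Phi (Suc k) x \<le> RHS x" for x
  proof (cases "Suc k \<le> \<tau> x")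
    case True
    then have i1': "ind k x = 1" by (simp add: ind_def)
    have mk: "min (\<tau> x) k = k" "min (\<tau> x) (Suc k) = Suc k" using True by auto
    have "Phi (Suc k) x = \<bar>s x + X x\<bar>^3 - 3 * vv * r * (s x + X x)^2"
      unfolding Phi_def W_def mk S_Suc i1' s_def X_def r_def by simp
    also have "\<dots> \<le> \<bar>s x\<bar>^3 - 3 * vv * sqrt (real k) * (s x)^2 + 3 * (s x * \<bar>s x\<bar> * X x) + 3 * (\<bar>s x\<bar> * (X x)^2) + 3 * \<bar>X x\<bar>^3
      - 6 * vv * r * (s x * X x) - 3 * vv * r * (X x)^2 - 3 * vv * (r - sqrt (real k)) * (s x)^2"
      by (rule step_ineq)
    also have "\<dots> = RHS x"
      unfolding RHS_def Phi_def W_def mk i1' s_def a_def r_def by simp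
    finally show ?thesis .
  next
    case False
    then have i0: "ind k x = 0" by (simp add: ind_def)
    have mk: "min (\<tau> x) (Suc k) = min (\<tau> x) k" using False by auto
    show ?thesis unfolding RHS_def Phi_def W_def i0 S_Suc mk by simp
  qed
  have Sm: "S h k \<in> borel_measurable (G k)" using S_meas[OF hm] .
  have SiA: "integrable M (\<lambda>x. \<bar>s x\<bar>^3)" unfolding s_def using B_int[OF hm i3] .
  have sm: "s \<in> borel_measurable (G k)" unfolding s_def using Sm by (simp add: fun_eq_iff[symmetric])
  have smM: "s \<in> borel_measurable M" using meas_GM[OF sm] .
  have s_int: "integrable M s"
  proof (rule Bochner_Integration.integrable_bound[where f="\<lambda>x. 1 + \<bar>s x\<bar>^3"])
    show "integrable M (\<lambda>x. 1 + \<bar>s x\<bar>^3)" using SiA by simp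
  qed (use smM abs_le_cube in auto)
  have s2_int: "integrable M (\<lambda>x. (s x)^2)"
  proof (rule Bochner_Integration.integrable_bound[where f="\<lambda>x. 1 + \<bar>s x\<bar>^3"])
    show "integrable M (\<lambda>x. 1 + \<bar>s x\<bar>^3)" using SiA by simp
  qed (use smM sq_le_cube in auto)
  have ss_int: "integrable M (\<lambda>x. s x * \<bar>s x\<bar>)"
  proof (rule Bochner_Integration.integrable_bound[where f="\<lambda>x. 1 + \<bar>s x\<bar>^3"])
    show "integrable M (\<lambda>x. 1 + \<bar>s x\<bar>^3)" using SiA by simp
    show "AE x in M. norm (s x * \<bar>s x\<bar>) \<le> norm (1 + \<bar>s x\<bar>^3)"
    proof (rule AE_I2)
      fix x show "norm (s x * \<bar>s x\<bar>) \<le> norm (1 + \<bar>s x\<bar>^3)"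
        using sq_le_cube[of "s x"] by (simp add: abs_mult power2_eq_square)
    qed
  qed (use smM in auto)
  have as_int: "integrable M (\<lambda>x. \<bar>s x\<bar>)" using s_int by simp
  have ssm: "(\<lambda>x. s x * \<bar>s x\<bar>) \<in> borel_measurable (G k)" using sm by measurable
  have asm: "(\<lambda>x. \<bar>s x\<bar>) \<in> borel_measurable (G k)" using sm by measurable
  have c1m: "(\<lambda>x. 1::real) \<in> borel_measurable (G k)" by simp
  have h2m: "(\<lambda>p. (h p)^2) \<in> borel_measurable borel" using hm by measurable
  have h3m: "(\<lambda>p. \<bar>h p\<bar>^3) \<in> borel_measurable borel" using hm by measurable
  have ic1: "integrable M (\<lambda>x. 1::real)" by simp
  define t1 where "t1 x = ind k x * (s x * \<bar>s x\<bar>) * X x" for x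
  define t2 where "t2 x = ind k x * \<bar>s x\<bar> * (X x)^2" for x
  define t3 where "t3 x = ind k x * 1 * \<bar>X x\<bar>^3" for x
  define t4 where "t4 x = ind k x * s x * X x" for x
  define t5 where "t5 x = ind k x * 1 * (X x)^2" for x
  define t6 where "t6 x = ind k x * (s x)^2" for x
  note T1 = indep_step[OF ssm ss_int hm i1[of "Suc k"], folded X_def, folded t1_def]
  note T2 = indep_step[OF asm as_int h2m i2[of "Suc k"], folded X_def, folded t2_def]
  note T3 = indep_step[OF c1m ic1 h3m i3[of "Suc k"], folded X_def, folded t3_def]
  note T4 = indep_step[OF sm s_int hm i1[of "Suc k"], folded X_def, folded t4_def]
  note T5 = indep_step[OF c1m ic1 h2m i2[of "Suc k"], folded X_def, folded t5_def]
  have t6e: "t6 = (\<lambda>x. ind k x * (s x)^2)" by (simp add: t6_def fun_eq_iff)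
  have T6: "integrable M t6" unfolding t6_def using ind_mult_int[OF s2_int] .
  have EX: "(\<integral>x. X x \<partial>M) = 0" unfolding X_def using m0 by simp
  have EX2: "(\<integral>x. (X x)^2 \<partial>M) = vv" unfolding X_def using m2 by simp
  have EX3: "(\<integral>x. \<bar>X x\<bar>^3 \<partial>M) \<le> c3" unfolding X_def using m3 by simp
  have indE: "0 \<le> integral\<^sup>L M (ind k)" using ind_01 by (simp add: integral_nonneg_AE)
  have RHS_eq: "RHS = (\<lambda>x. Phi k x + 3 * t1 x + 3 * t2 x + 3 * t3 x - 6 * vv * r * t4 x - 3 * vv * r * t5 x - 3 * vv * a * t6 x)"
    unfolding RHS_def t1_def t2_def t3_def t4_def t5_def t6_def by simp
  have RHS_int: "integrable M RHS"
    unfolding RHS_eq using Phi_int[of k] T1(1) T2(1) T3(1) T4(1) T5(1) T6 by simp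
  have ERHS0: "(\<integral>x. RHS x \<partial>M) = (\<integral>x. Phi k x \<partial>M) + 3 * integral\<^sup>L M t1 + 3 * integral\<^sup>L M t2 + 3 * integral\<^sup>L M t3
      - 6 * vv * r * integral\<^sup>L M t4 - 3 * vv * r * integral\<^sup>L M t5 - 3 * vv * a * integral\<^sup>L M t6"
    unfolding RHS_eq using Phi_int[of k] T1(1) T2(1) T3(1) T4(1) T5(1) T6 by simp
  have Et: "integral\<^sup>L M t1 = 0" "integral\<^sup>L M t2 = (\<integral>x. ind k x * \<bar>s x\<bar> \<partial>M) * vv"
     "integral\<^sup>L M t3 = (\<integral>x. ind k x \<partial>M) * (\<integral>x. \<bar>X x\<bar>^3 \<partial>M)"
     "integral\<^sup>L M t4 = 0" "integral\<^sup>L M t5 = (\<integral>x. ind k x \<partial>M) * vv"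
    using T1(2) T2(2) T3(2) T4(2) T5(2) EX EX2 by (simp_all add: X_def)
  have ERHS: "(\<integral>x. RHS x \<partial>M) = (\<integral>x. Phi k x \<partial>M) + 3 * vv * (\<integral>x. ind k x * \<bar>s x\<bar> \<partial>M)
      + 3 * ((\<integral>x. ind k x \<partial>M) * (\<integral>x. \<bar>X x\<bar>^3 \<partial>M)) - 3 * vv * r * ((\<integral>x. ind k x \<partial>M) * vv)
      - 3 * vv * a * (\<integral>x. ind k x * (s x)^2 \<partial>M)"
    unfolding ERHS0 Et t6e by (simp add: algebra_simps)
  have pw2: "ind k x * \<bar>s x\<bar> \<le> a * (ind k x * (s x)^2) + 2 * r * ind k x" for x
  proof -
    have "\<bar>s x\<bar> \<le> a * (s x)^2 + 2 * r" unfolding a_def r_def by (rule sqrt_diff(2))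
    then have "ind k x * \<bar>s x\<bar> \<le> ind k x * (a * (s x)^2 + 2 * r)"
      using ind_01(2) by (rule mult_left_mono)
    then show ?thesis by (simp add: algebra_simps)
  qed
  have E2: "(\<integral>x. ind k x * \<bar>s x\<bar> \<partial>M) \<le> a * (\<integral>x. ind k x * (s x)^2 \<partial>M) + 2 * r * (\<integral>x. ind k x \<partial>M)"
  proof -
    have "(\<integral>x. ind k x * \<bar>s x\<bar> \<partial>M) \<le> (\<integral>x. a * (ind k x * (s x)^2) + 2 * r * ind k x \<partial>M)"
      by (rule integral_mono[OF ind_mult_int[OF as_int] _ pw2]) (use T6 ind_int in \<open>simp add: t6e\<close>)
    also have "\<dots> = a * (\<integral>x. ind k x * (s x)^2 \<partial>M) + 2 * r * (\<integral>x. ind k x \<partial>M)"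
      using T6 ind_int by (simp add: t6e)
    finally show ?thesis .
  qed
  have mmstep: "mm k x + r * ind k x \<le> mm (Suc k) x" for x
  proof (cases "Suc k \<le> \<tau> x")
    case True
    then have mk: "min (\<tau> x) k = k" "min (\<tau> x) (Suc k) = Suc k" and i1': "ind k x = 1" by (auto simp: ind_def)
    have "real k * sqrt (real k) \<le> real k * r" unfolding r_def by (intro mult_left_mono) auto
    then show ?thesis unfolding mm_def mk i1' r_def by (simp add: algebra_simps)
  next
    case False
    then have mk: "min (\<tau> x) (Suc k) = min (\<tau> x) k" and i0: "ind k x = 0" by (auto simp: ind_def)
    show ?thesis unfolding mm_def mk i0 by simp
  qed
  have Emm: "(\<integral>x. mm k x \<partial>M) + r * (\<integral>x. ind k x \<partial>M) \<le> (\<integral>x. mm (Suc k) x \<partial>M)"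
  proof -
    have "(\<integral>x. mm k x + r * ind k x \<partial>M) \<le> (\<integral>x. mm (Suc k) x \<partial>M)"
      by (rule integral_mono[OF _ mm_int mmstep]) (use mm_int ind_int in simp)
    then show ?thesis using mm_int ind_int by simp
  qed
  have "(\<integral>x. Phi (Suc k) x \<partial>M) \<le> (\<integral>x. RHS x \<partial>M)"
    by (rule integral_mono[OF Phi_int RHS_int pw])
  also have "\<dots> \<le> (\<integral>x. Phi k x \<partial>M) + 6 * vv * r * (\<integral>x. ind k x \<partial>M) + 3 * c3 * (\<integral>x. ind k x \<partial>M)"
  proof -
    have A: "3 * vv * (\<integral>x. ind k x * \<bar>s x\<bar> \<partial>M) \<le> 3 * vv * (a * (\<integral>x. ind k x * (s x)^2 \<partial>M) + 2 * r * (\<integral>x. ind k x \<partial>M))"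
      using E2 v0 by (intro mult_left_mono) auto
    have B: "3 * ((\<integral>x. ind k x \<partial>M) * (\<integral>x. \<bar>X x\<bar>^3 \<partial>M)) \<le> 3 * ((\<integral>x. ind k x \<partial>M) * c3)"
      using EX3 indE by (intro mult_left_mono) auto
    have C: "0 \<le> 3 * vv * r * ((\<integral>x. ind k x \<partial>M) * vv)" using v0 r1 indE by simp
    show ?thesis unfolding ERHS using A B C by (simp add: algebra_simps)
  qed
  also have "\<dots> \<le> (6 * vv + 3 * c3) * (\<integral>x. mm k x \<partial>M) + (6 * vv + 3 * c3) * (r * (\<integral>x. ind k x \<partial>M))"
  proof -
    have IH: "(\<integral>x. Phi k x \<partial>M) \<le> (6 * vv + 3 * c3) * (\<integral>x. mm k x \<partial>M)" using Suc unfolding Phi_def .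
    have "3 * c3 * (\<integral>x. ind k x \<partial>M) \<le> 3 * c3 * (r * (\<integral>x. ind k x \<partial>M))"
      using c30 indE r1 by (intro mult_left_mono) (auto simp: mult_le_cancel_right1)
    then show ?thesis using IH by (simp add: algebra_simps)
  qed
  also have "\<dots> \<le> (6 * vv + 3 * c3) * (\<integral>x. mm (Suc k) x \<partial>M)"
    using Emm v0 c30 by (simp add: distrib_left[symmetric] mult_left_mono)
  finally show ?case unfolding Phi_def .
qed

end


lemma (in prob_space) fatou_real:
  fixes u :: "nat \<Rightarrow> 'a \<Rightarrow> real"
  assumes ui: "\<And>n. integrable M (u n)" and u0: "\<And>n x. 0 \<le> u n x"
    and ev: "\<And>x. x \<in> space M \<Longrightarrow> eventually (\<lambda>n. u n x = f x) sequentially"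
    and bd: "\<And>n. integral\<^sup>L M (u n) \<le> B"
  shows "integrable M f \<and> integral\<^sup>L M f \<le> B"
proof -
  have lim: "(\<lambda>n. u n x) \<longlonglongrightarrow> f x" if "x \<in> space M" for x
    using tendsto_eventually[OF ev[OF that]] .
  have fm: "f \<in> borel_measurable M"
    by (rule borel_measurable_LIMSEQ_real[OF lim]) (use ui in auto)
  have f0: "0 \<le> f x" if x: "x \<in> space M" for x
  proof -
    obtain n where "u n x = f x" using ev[OF x] unfolding eventually_sequentially by (metis order_refl)
    then show ?thesis using u0[of n x] by simp
  qed
  have B0: "0 \<le> B" using bd[of 0] integral_nonneg_AE[of "u 0" M] u0 by (meson AE_I2 order_trans)
  have eq: "liminf (\<lambda>n. ennreal (u n x)) = ennreal (f x)" if "x \<in> space M" for x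
  proof (rule lim_imp_Liminf)
    show "((\<lambda>n. ennreal (u n x)) \<longlongrightarrow> ennreal (f x)) sequentially"
      by (rule tendsto_eventually) (use ev[OF that] in \<open>auto elim: eventually_mono\<close>)
  qed simp
  have "(\<integral>\<^sup>+ x. ennreal (f x) \<partial>M) = (\<integral>\<^sup>+ x. liminf (\<lambda>n. ennreal (u n x)) \<partial>M)"
    by (rule nn_integral_cong) (simp add: eq)
  also have "\<dots> \<le> liminf (\<lambda>n. \<integral>\<^sup>+ x. ennreal (u n x) \<partial>M)"
    by (rule nn_integral_liminf) (use ui in auto)
  also have "\<dots> \<le> ennreal B"
  proof -
    have "(\<integral>\<^sup>+ x. ennreal (u n x) \<partial>M) = ennreal (integral\<^sup>L M (u n))" for n
      by (rule nn_integral_eq_integral[OF ui]) (simp add: u0)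
    then have "(\<integral>\<^sup>+ x. ennreal (u n x) \<partial>M) \<le> ennreal B" for n
      using bd[of n] by (simp add: ennreal_leI)
    then have "limsup (\<lambda>n. \<integral>\<^sup>+ x. ennreal (u n x) \<partial>M) \<le> ennreal B"
      by (intro Limsup_bounded) auto
    moreover have "liminf (\<lambda>n. \<integral>\<^sup>+ x. ennreal (u n x) \<partial>M) \<le> limsup (\<lambda>n. \<integral>\<^sup>+ x. ennreal (u n x) \<partial>M)"
      by (rule Liminf_le_Limsup) simp
    ultimately show ?thesis by (rule order_trans[rotated])
  qed
  finally have nnb: "(\<integral>\<^sup>+ x. ennreal (f x) \<partial>M) \<le> ennreal B" .
  have fi: "integrable M f"
    by (rule integrableI_nonneg[OF fm]) (use f0 nnb in \<open>auto intro: AE_I2 simp: top_unique le_less_trans\<close>)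
  have "ennreal (integral\<^sup>L M f) \<le> ennreal B"
    using nnb nn_integral_eq_integral[OF fi] f0 by (simp add: AE_I2)
  then have "integral\<^sup>L M f \<le> B" using B0 by (simp add: ennreal_le_iff)
  then show ?thesis using fi by simp
qed

context wsetup begin

lemma S_psum: "S h n x = psum (\<lambda>j x. h (P j x)) (min (\<tau> x) n) x"
proof -
  have "{j \<in> {1..n}. j \<le> \<tau> x} = {1..min (\<tau> x) n}" by auto
  then show ?thesis unfolding S_def psum_def
    using sum.inter_filter[of "{1..n}" "\<lambda>j. h (P j x)" "\<lambda>j. j \<le> \<tau> x"] by simp
qed

lemma S_ev: "eventually (\<lambda>n. S h n x = psum (\<lambda>j x. h (P j x)) (\<tau> x) x) sequentially"
  unfolding S_psum eventually_sequentially by (rule exI[of _ "\<tau> x"]) (simp add: min_absorb1)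

lemma A_inf:
  assumes hm: "h \<in> borel_measurable borel"
  and i1: "\<And>j. 1 \<le> j \<Longrightarrow> integrable M (\<lambda>x. h (P j x))"
  and m0: "\<And>j. 1 \<le> j \<Longrightarrow> (\<integral>x. h (P j x) \<partial>M) = 0"
  and ip: "\<And>j. 1 \<le> j \<Longrightarrow> integrable M (\<lambda>x. p15 (h (P j x)))"
  and mp: "\<And>j. 1 \<le> j \<Longrightarrow> (\<integral>x. p15 (h (P j x)) \<partial>M) \<le> c"
  and ti: "integrable M (\<lambda>x. real (\<tau> x))"
  shows "integrable M (\<lambda>x. p15 (psum (\<lambda>j x. h (P j x)) (\<tau> x) x)) \<and>
    (\<integral>x. p15 (psum (\<lambda>j x. h (P j x)) (\<tau> x) x) \<partial>M) \<le> 2 * c * (\<integral>x. real (\<tau> x) \<partial>M)"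
proof (rule fatou_real)
  note A = A_fin[OF hm i1 m0 ip mp]
  have c0: "0 \<le> c"
  proof -
    have "0 \<le> (\<integral>x. p15 (h (P 1 x)) \<partial>M)" by (rule integral_nonneg_AE) simp
    moreover have "(\<integral>x. p15 (h (P 1 x)) \<partial>M) \<le> c" by (rule mp) simp
    ultimately show ?thesis by linarith
  qed
  show "integrable M (\<lambda>x. p15 (S h n x))" for n using A by simp
  show "0 \<le> p15 (S h n x)" for n x by simp
  show "eventually (\<lambda>n. p15 (S h n x) = p15 (psum (\<lambda>j x. h (P j x)) (\<tau> x) x)) sequentially" for x
    using S_ev[of h x] by (auto elim: eventually_mono)
  show "(\<integral>x. p15 (S h n x) \<partial>M) \<le> 2 * c * (\<integral>x. real (\<tau> x) \<partial>M)" for n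
  proof -
    have "(\<integral>x. real (min (\<tau> x) n) \<partial>M) \<le> (\<integral>x. real (\<tau> x) \<partial>M)"
      by (rule integral_mono[OF min_int ti]) simp
    then have "2 * c * (\<integral>x. real (min (\<tau> x) n) \<partial>M) \<le> 2 * c * (\<integral>x. real (\<tau> x) \<partial>M)"
      using c0 by (intro mult_left_mono) auto
    then show ?thesis using A[of n] by linarith
  qed
qed

lemma B_fin:
  assumes hm: "h \<in> borel_measurable borel"
  and i1: "\<And>j. 1 \<le> j \<Longrightarrow> integrable M (\<lambda>x. h (P j x))"
  and m0: "\<And>j. 1 \<le> j \<Longrightarrow> (\<integral>x. h (P j x) \<partial>M) = 0"
  and i2: "\<And>j. 1 \<le> j \<Longrightarrow> integrable M (\<lambda>x. (h (P j x))^2)"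
  and m2: "\<And>j. 1 \<le> j \<Longrightarrow> (\<integral>x. (h (P j x))^2 \<partial>M) = vv"
  and i3: "\<And>j. 1 \<le> j \<Longrightarrow> integrable M (\<lambda>x. \<bar>h (P j x)\<bar>^3)"
  and m3: "\<And>j. 1 \<le> j \<Longrightarrow> (\<integral>x. \<bar>h (P j x)\<bar>^3 \<partial>M) \<le> c3"
  shows "(\<integral>x. \<bar>S h n x\<bar>^3 \<partial>M) \<le> 2 * (6 * vv + 3 * c3 + 3 * vv * (6 * vv + 1)^2) * (\<integral>x. mm n x \<partial>M)"
proof -
  note Ph = B_phi[OF hm i1 m0 i2 m2 i3 m3, of n]
  have v0: "0 \<le> vv"
  proof -
    have "0 \<le> (\<integral>x. (h (P 1 x))^2 \<partial>M)" by (rule integral_nonneg_AE) simp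
    moreover have "(\<integral>x. (h (P 1 x))^2 \<partial>M) = vv" by (rule m2) simp
    ultimately show ?thesis by linarith
  qed
  define d where "d = 1 / (6 * vv + 1)"
  have d0: "0 < d" using v0 by (simp add: d_def)
  have dd: "3 * vv * d \<le> 1/2" using v0 by (simp add: d_def field_simps)
  have d2: "1 / d^2 = (6 * vv + 1)^2" by (simp add: d_def power_one_over)
  have Si: "integrable M (\<lambda>x. \<bar>S h n x\<bar>^3)" using B_int[OF hm i3] .
  have Wi: "integrable M (W h n)" using W_int[OF hm i3] .
  define g where "g = (\<integral>x. \<bar>S h n x\<bar>^3 \<partial>M)"
  have g0: "0 \<le> g" unfolding g_def by (rule integral_nonneg_AE) simp
  have EPhi: "(\<integral>x. \<bar>S h n x\<bar>^3 - 3 * vv * W h n x \<partial>M) = g - 3 * vv * (\<integral>x. W h n x \<partial>M)"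
    unfolding g_def using Si Wi by simp
  have pwW: "W h n x \<le> d * \<bar>S h n x\<bar>^3 + mm n x / d^2" for x
  proof -
    have "\<bar>S h n x\<bar>^2 * sqrt (real (min (\<tau> x) n)) \<le> d * \<bar>S h n x\<bar>^3 + sqrt (real (min (\<tau> x) n))^3 / d^2"
      by (rule young3) (use d0 in auto)
    moreover have "sqrt (real (min (\<tau> x) n))^3 = mm n x"
      unfolding mm_def by (simp add: power3_eq_cube)
    ultimately show ?thesis unfolding W_def by (simp add: mult.commute)
  qed
  have EW: "(\<integral>x. W h n x \<partial>M) \<le> d * g + (\<integral>x. mm n x \<partial>M) / d^2"
  proof -
    have "(\<integral>x. W h n x \<partial>M) \<le> (\<integral>x. d * \<bar>S h n x\<bar>^3 + mm n x / d^2 \<partial>M)"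
      by (rule integral_mono[OF Wi _ pwW]) (use Si mm_int in simp)
    also have "\<dots> = d * g + (\<integral>x. mm n x \<partial>M) / d^2" unfolding g_def using Si mm_int by simp
    finally show ?thesis .
  qed
  define E where "E = (\<integral>x. mm n x \<partial>M)"
  have E0: "0 \<le> E" unfolding E_def by (rule integral_nonneg_AE) (simp add: mm_nonneg)
  have "g \<le> (6 * vv + 3 * c3) * E + 3 * vv * (d * g + E / d^2)"
  proof -
    have "3 * vv * (\<integral>x. W h n x \<partial>M) \<le> 3 * vv * (d * g + E / d^2)"
      using EW v0 unfolding E_def by (intro mult_left_mono) auto
    then show ?thesis using Ph EPhi unfolding E_def by linarith
  qed
  also have "\<dots> = ((6 * vv + 3 * c3) * E + 3 * vv * (6 * vv + 1)^2 * E) + (3 * vv * d) * g"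
  proof -
    have "E / d^2 = E * (1 / d^2)" by simp
    also have "\<dots> = E * (6 * vv + 1)^2" by (simp only: d2)
    finally have q: "E / d^2 = (6 * vv + 1)^2 * E" by simp
    show ?thesis unfolding q by (simp add: algebra_simps)
  qed
  finally have f1: "g \<le> ((6 * vv + 3 * c3) * E + 3 * vv * (6 * vv + 1)^2 * E) + (3 * vv * d) * g" .
  have f2: "(3 * vv * d) * g \<le> 1/2 * g" using dd g0 by (rule mult_right_mono)
  have aux: "\<And>a t. g \<le> a + t \<Longrightarrow> t \<le> 1/2 * g \<Longrightarrow> g \<le> 2 * a" by linarith
  have "g \<le> 2 * ((6 * vv + 3 * c3) * E + 3 * vv * (6 * vv + 1)^2 * E)" by (rule aux[OF f1 f2])
  then show ?thesis unfolding g_def E_def by (simp add: algebra_simps)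
qed

end


context wsetup begin

lemma B_inf:
  assumes hm: "h \<in> borel_measurable borel"
  and i1: "\<And>j. 1 \<le> j \<Longrightarrow> integrable M (\<lambda>x. h (P j x))"
  and m0: "\<And>j. 1 \<le> j \<Longrightarrow> (\<integral>x. h (P j x) \<partial>M) = 0"
  and i2: "\<And>j. 1 \<le> j \<Longrightarrow> integrable M (\<lambda>x. (h (P j x))^2)"
  and m2: "\<And>j. 1 \<le> j \<Longrightarrow> (\<integral>x. (h (P j x))^2 \<partial>M) = vv"
  and i3: "\<And>j. 1 \<le> j \<Longrightarrow> integrable M (\<lambda>x. \<bar>h (P j x)\<bar>^3)"
  and m3: "\<And>j. 1 \<le> j \<Longrightarrow> (\<integral>x. \<bar>h (P j x)\<bar>^3 \<partial>M) \<le> c3"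
  and ti: "integrable M (\<lambda>x. real (\<tau> x) * sqrt (real (\<tau> x)))"
  shows "integrable M (\<lambda>x. \<bar>psum (\<lambda>j x. h (P j x)) (\<tau> x) x\<bar>^3) \<and>
    (\<integral>x. \<bar>psum (\<lambda>j x. h (P j x)) (\<tau> x) x\<bar>^3 \<partial>M) \<le> 2 * (6 * vv + 3 * c3 + 3 * vv * (6 * vv + 1)^2) * (\<integral>x. real (\<tau> x) * sqrt (real (\<tau> x)) \<partial>M)"
proof (rule fatou_real)
  note B = B_fin[OF hm i1 m0 i2 m2 i3 m3]
  have v0: "0 \<le> vv"
  proof -
    have "0 \<le> (\<integral>x. (h (P 1 x))^2 \<partial>M)" by (rule integral_nonneg_AE) simp
    moreover have "(\<integral>x. (h (P 1 x))^2 \<partial>M) = vv" by (rule m2) simp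
    ultimately show ?thesis by linarith
  qed
  have c0: "0 \<le> c3"
  proof -
    have "0 \<le> (\<integral>x. \<bar>h (P 1 x)\<bar>^3 \<partial>M)" by (rule integral_nonneg_AE) simp
    moreover have "(\<integral>x. \<bar>h (P 1 x)\<bar>^3 \<partial>M) \<le> c3" by (rule m3) simp
    ultimately show ?thesis by linarith
  qed
  show "integrable M (\<lambda>x. \<bar>S h n x\<bar>^3)" for n using B_int[OF hm i3] .
  show "0 \<le> \<bar>S h n x\<bar>^3" for n x by simp
  show "eventually (\<lambda>n. \<bar>S h n x\<bar>^3 = \<bar>psum (\<lambda>j x. h (P j x)) (\<tau> x) x\<bar>^3) sequentially" for x
    using S_ev[of h x] by (auto elim: eventually_mono)
  show "(\<integral>x. \<bar>S h n x\<bar>^3 \<partial>M) \<le> 2 * (6 * vv + 3 * c3 + 3 * vv * (6 * vv + 1)^2) * (\<integral>x. real (\<tau> x) * sqrt (real (\<tau> x)) \<partial>M)" for n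
  proof -
    have "(\<integral>x. mm n x \<partial>M) \<le> (\<integral>x. real (\<tau> x) * sqrt (real (\<tau> x)) \<partial>M)"
      by (rule integral_mono[OF mm_int ti]) (auto simp: mm_def intro!: mult_mono)
    moreover have "0 \<le> 2 * (6 * vv + 3 * c3 + 3 * vv * (6 * vv + 1)^2)" using v0 c0 by simp
    ultimately show ?thesis using B[of n] by (meson mult_left_mono order_trans)
  qed
qed

lemma S_int_p15:
  assumes "integrable M (\<lambda>x. p15 (S h k x))" "h \<in> borel_measurable borel"
  shows "integrable M (S h k)"
proof (rule Bochner_Integration.integrable_bound[where f="\<lambda>x. 1 + p15 (S h k x)"])
  show "integrable M (\<lambda>x. 1 + p15 (S h k x))" using assms by simp
  show "S h k \<in> borel_measurable M" using S_measM[OF assms(2)] .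
  show "AE x in M. norm (S h k x) \<le> norm (1 + p15 (S h k x))"
  proof (rule AE_I2)
    fix x
    have "\<bar>S h k x\<bar> \<le> 1 + p15 (S h k x)"
    proof (cases "\<bar>S h k x\<bar> \<le> 1")
      case True then show ?thesis using p15_nonneg[of "S h k x"] by linarith
    next
      case False
      then have "1 \<le> sqrt \<bar>S h k x\<bar>" by simp
      then have "\<bar>S h k x\<bar> * 1 \<le> \<bar>S h k x\<bar> * sqrt \<bar>S h k x\<bar>" by (intro mult_left_mono) auto
      then show ?thesis unfolding p15_def by simp
    qed
    then show "norm (S h k x) \<le> norm (1 + p15 (S h k x))" by simp
  qed
qed

lemma prod_fin:
  assumes h1m: "h1 \<in> borel_measurable borel" and h2m: "h2 \<in> borel_measurable borel"
  and i1: "\<And>j. 1 \<le> j \<Longrightarrow> integrable M (\<lambda>x. h1 (P j x))"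
  and m1: "\<And>j. 1 \<le> j \<Longrightarrow> (\<integral>x. h1 (P j x) \<partial>M) = 0"
  and i2: "\<And>j. 1 \<le> j \<Longrightarrow> integrable M (\<lambda>x. h2 (P j x))"
  and m2: "\<And>j. 1 \<le> j \<Longrightarrow> (\<integral>x. h2 (P j x) \<partial>M) = 0"
  and i12: "\<And>j. 1 \<le> j \<Longrightarrow> integrable M (\<lambda>x. h1 (P j x) * h2 (P j x))"
  and m12: "\<And>j. 1 \<le> j \<Longrightarrow> (\<integral>x. h1 (P j x) * h2 (P j x) \<partial>M) = mu"
  and S1i: "\<And>k. integrable M (S h1 k)" and S2i: "\<And>k. integrable M (S h2 k)"
  and Si: "\<And>k. integrable M (\<lambda>x. S h1 k x * S h2 k x)"
  shows "(\<integral>x. S h1 n x * S h2 n x \<partial>M) = (\<integral>x. real (min (\<tau> x) n) \<partial>M) * mu"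
proof (induction n)
  case 0
  then show ?case by simp
next
  case (Suc k)
  define X1 where "X1 x = h1 (P (Suc k) x)" for x
  define X2 where "X2 x = h2 (P (Suc k) x)" for x
  have pm: "(\<lambda>p. h1 p * h2 p) \<in> borel_measurable borel" using h1m h2m by measurable
  have ic1: "integrable M (\<lambda>x. 1::real)" by simp
  have c1m: "(\<lambda>x. 1::real) \<in> borel_measurable (G k)" by simp
  define u1 where "u1 x = ind k x * S h1 k x * X2 x" for x
  define u2 where "u2 x = ind k x * S h2 k x * X1 x" for x
  define u3 where "u3 x = ind k x * 1 * (X1 x * X2 x)" for x
  note U1 = indep_step[OF S_meas[OF h1m] S1i h2m i2[of "Suc k"], folded X2_def, folded u1_def]
  note U2 = indep_step[OF S_meas[OF h2m] S2i h1m i1[of "Suc k"], folded X1_def, folded u2_def]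
  note U3 = indep_step[OF c1m ic1 pm i12[of "Suc k"], folded X1_def X2_def, folded u3_def]
  have pw: "S h1 (Suc k) x * S h2 (Suc k) x = S h1 k x * S h2 k x + u1 x + u2 x + u3 x" for x
  proof -
    have "ind k x * ind k x = ind k x" using ind_01(1)[of k x] by auto
    then show ?thesis unfolding S_Suc u1_def u2_def u3_def X1_def X2_def
      by (simp add: algebra_simps) (metis (no_types, lifting) mult.assoc mult.commute)
  qed
  have fe: "(\<lambda>x. S h1 (Suc k) x * S h2 (Suc k) x) = (\<lambda>x. S h1 k x * S h2 k x + u1 x + u2 x + u3 x)"
    using pw by (simp add: fun_eq_iff)
  have E1: "(\<integral>x. X1 x \<partial>M) = 0" "(\<integral>x. X2 x \<partial>M) = 0" "(\<integral>x. X1 x * X2 x \<partial>M) = mu"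
    unfolding X1_def X2_def using m1 m2 m12 by simp_all
  have "(\<integral>x. S h1 (Suc k) x * S h2 (Suc k) x \<partial>M) = (\<integral>x. S h1 k x * S h2 k x \<partial>M) + integral\<^sup>L M u1 + integral\<^sup>L M u2 + integral\<^sup>L M u3"
    unfolding fe using Si[of k] U1(1) U2(1) U3(1) by simp
  also have "\<dots> = (\<integral>x. real (min (\<tau> x) k) \<partial>M) * mu + (\<integral>x. ind k x \<partial>M) * mu"
    using Suc U1(2) U2(2) U3(2) E1 by simp
  also have "\<dots> = (\<integral>x. real (min (\<tau> x) (Suc k)) \<partial>M) * mu"
    unfolding min_Suc using min_int ind_int by (simp add: algebra_simps)
  finally show ?case .
qed

end


context wsetup begin
lemma psum_meas:
  assumes hm: "h \<in> borel_measurable borel"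
  shows "(\<lambda>x. psum (\<lambda>j x. h (P j x)) (\<tau> x) x) \<in> borel_measurable M"
proof (rule borel_measurable_LIMSEQ_real)
  show "(\<lambda>n. S h n x) \<longlonglongrightarrow> psum (\<lambda>j x. h (P j x)) (\<tau> x) x" for x
    using tendsto_eventually[OF S_ev[of h x]] .
  show "S h n \<in> borel_measurable M" for n using S_measM[OF hm] .
qed
end

lemma young_pq: fixes u w d :: real assumes d: "d > 0"
  shows "\<bar>u * w\<bar> \<le> d * p15 u + \<bar>w\<bar>^3 / d^2"
proof (cases "\<bar>w\<bar> \<le> d * sqrt \<bar>u\<bar>")
  case True
  then have "\<bar>u\<bar> * \<bar>w\<bar> \<le> \<bar>u\<bar> * (d * sqrt \<bar>u\<bar>)" by (intro mult_left_mono) auto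
  then have "\<bar>u * w\<bar> \<le> d * p15 u" by (simp add: p15_def abs_mult algebra_simps)
  moreover have "0 \<le> \<bar>w\<bar>^3 / d^2" using d by simp
  ultimately show ?thesis by linarith
next
  case False
  then have "sqrt \<bar>u\<bar> \<le> \<bar>w\<bar> / d" using d by (simp add: field_simps)
  then have "(sqrt \<bar>u\<bar>)^2 \<le> (\<bar>w\<bar> / d)^2" by (intro power_mono) auto
  then have "\<bar>u\<bar> \<le> \<bar>w\<bar>^2 / d^2" by (simp add: power_divide)
  then have "\<bar>u\<bar> * \<bar>w\<bar> \<le> \<bar>w\<bar>^2 / d^2 * \<bar>w\<bar>" by (intro mult_right_mono) auto
  moreover have "\<bar>w\<bar>^2 / d^2 * \<bar>w\<bar> = \<bar>w\<bar>^3 / d^2" by (simp add: power2_eq_square power3_eq_cube)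
  moreover have "0 \<le> d * p15 u" using d by simp
  moreover have "\<bar>u * w\<bar> = \<bar>u\<bar> * \<bar>w\<bar>" by (simp add: abs_mult)
  ultimately show ?thesis by linarith
qed

lemma young_11: "\<bar>u * w\<bar> \<le> p15 u + \<bar>w\<bar>^3" for u w :: real
  using young_pq[of 1 u w] by simp

lemma powr32: "0 \<le> z \<Longrightarrow> z powr (3/2) = z * sqrt z" for z :: real
proof -
  assume z: "0 \<le> z"
  show ?thesis
  proof (cases "z = 0")
    case True then show ?thesis by simp
  next
    case False
    then have "z powr (3/2) = z powr (1 + 1/2)" by simp
    also have "\<dots> = z powr 1 * z powr (1/2)" by (rule powr_add)
    also have "\<dots> = z * sqrt z" using False z by (simp add: powr_half_sqrt)
    finally show ?thesis .
  qed
qed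

lemma nat_le_msqrt: "real t \<le> real t * sqrt (real t)" for t :: nat
proof (cases "t = 0")
  case False
  then have "1 \<le> sqrt (real t)" by simp
  then show ?thesis by (simp add: mult_le_cancel_left1)
qed simp

lemma conv_aux:
  fixes x a b :: "nat \<Rightarrow> real" and B1 A2 :: real
  assumes bd: "\<And>n d1 d2. d1 > 0 \<Longrightarrow> d2 > 0 \<Longrightarrow> \<bar>x n\<bar> \<le> d1 * a n + B1 / d1^2 + d2 * A2 + b n / d2^2"
    and a: "a \<longlonglongrightarrow> 0" and b: "b \<longlonglongrightarrow> 0" and B1: "0 \<le> B1" and A2: "0 \<le> A2"
  shows "x \<longlonglongrightarrow> 0"
proof (rule LIMSEQ_I)
  fix r :: real assume r: "0 < r"
  define d2 where "d2 = r / (4 * (A2 + 1))"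
  define d1 where "d1 = max 1 (4 * (B1 + 1) / r)"
  have d2p: "0 < d2" using r A2 by (simp add: d2_def)
  have d1p: "0 < d1" "1 \<le> d1" by (auto simp: d1_def)
  obtain N1 where N1: "\<And>n. n \<ge> N1 \<Longrightarrow> norm (a n - 0) < r / (4 * d1)"
    using LIMSEQ_D[OF a, of "r / (4 * d1)"] r d1p by auto
  obtain N2 where N2: "\<And>n. n \<ge> N2 \<Longrightarrow> norm (b n - 0) < r * d2^2 / 4"
    using LIMSEQ_D[OF b, of "r * d2^2 / 4"] r d2p by auto
  show "\<exists>no. \<forall>n\<ge>no. norm (x n - 0) < r"
  proof (intro exI allI impI)
    fix n assume n: "max N1 N2 \<le> n"
    have t1: "d1 * a n < r / 4"
    proof -
      have "\<bar>a n\<bar> < r / (4 * d1)" using N1[of n] n by simp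
      then have "d1 * a n < d1 * (r / (4 * d1))" using d1p by (intro mult_strict_left_mono) auto
      then show ?thesis using d1p by simp
    qed
    have t2: "B1 / d1^2 < r / 4"
    proof -
      have "d1 \<le> d1^2" using d1p by (simp add: power2_eq_square mult_le_cancel_left1)
      then have "B1 / d1^2 \<le> B1 / d1" using B1 d1p by (intro divide_left_mono) auto
      also have "\<dots> \<le> B1 / (4 * (B1 + 1) / r)" using B1 r by (intro divide_left_mono) (auto simp: d1_def)
      also have "\<dots> = r * B1 / (4 * (B1 + 1))" by simp
      also have "\<dots> < r / 4" using r B1 by (simp add: field_simps)
      finally show ?thesis .
    qed
    have t3: "d2 * A2 < r / 4"
      unfolding d2_def using r A2 by (simp add: field_simps)
    have t4: "b n / d2^2 < r / 4"
    proof -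
      have "\<bar>b n\<bar> < r * d2^2 / 4" using N2[of n] n by simp
      then have "b n < r * d2^2 / 4" by simp
      then show ?thesis using d2p by (simp add: field_simps)
    qed
    have "\<bar>x n\<bar> \<le> d1 * a n + B1 / d1^2 + d2 * A2 + b n / d2^2" using bd d1p d2p by simp
    then have "\<bar>x n\<bar> < r" using t1 t2 t3 t4 by linarith
    then show "norm (x n - 0) < r" by simp
  qed
qed



lemma psum_split: "psum X T x = psum X (min T n) x + psum (\<lambda>j x. X (n + j) x) (T - n) x"
proof (cases "T \<le> n")
  case True then show ?thesis by (simp add: psum_def min_absorb1)
next
  case False
  then obtain r where r: "T = n + r" by (metis le_add_diff_inverse nat_le_linear)
  have "psum X T x = (\<Sum>j=1..n. X j x) + (\<Sum>j=n+1..n+r. X j x)"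
    unfolding psum_def r by (rule sum.ub_add_nat) simp
  moreover have "(\<Sum>j=n+1..n+r. X j x) = (\<Sum>j=1..r. X (n + j) x)"
  proof -
    have "{n+1..n+r} = {1+n..r+n}" by (simp add: add.commute)
    then show ?thesis using sum.shift_bounds_cl_nat_ivl[of "\<lambda>j. X j x" 1 n r] by (simp add: add.commute)
  qed
  moreover have "min T n = n" "T - n = r" using False r by auto
  ultimately show ?thesis by (simp add: psum_def)
qed

theorem lemma4p2:
  fixes M :: "'a measure" and F :: "nat \<Rightarrow> 'a measure"
    and e1 e2 :: "nat \<Rightarrow> 'a \<Rightarrow> real" and t :: "'a \<Rightarrow> nat"
  assumes "prob_space M"
    and "filtration (space M) F"
    and "\<And>n. sets (F n) \<subseteq> sets M"
    and "indep_adapted M F (\<lambda>i x. (e1 i x, e2 i x))"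
    and "prob_space.indep_vars M (\<lambda>_. borel) (\<lambda>i x. (e1 i x, e2 i x)) {1..}"
    and "\<And>i. i \<ge> 1 \<Longrightarrow> distr M borel (\<lambda>x. (e1 i x, e2 i x)) = distr M borel (\<lambda>x. (e1 1 x, e2 1 x))"
    and "integrable M (e1 1)" and "integrable M (e2 1)"
    and "integral\<^sup>L M (e1 1) = 0" and "integral\<^sup>L M (e2 1) = 0"
    and "stopping_time F t"
    and "integrable M (\<lambda>x. \<bar>e1 1 x\<bar> powr (3/2))"
    and "integrable M (\<lambda>x. \<bar>e2 1 x\<bar> ^ 3)"
    and "integrable M (\<lambda>x. real (t x) powr (3/2))"
  shows "integral\<^sup>L M (\<lambda>x. psum e1 (t x) x * psum e2 (t x) x)
           = integral\<^sup>L M (\<lambda>x. real (t x)) * integral\<^sup>L M (\<lambda>x. e1 1 x * e2 1 x)"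
proof -
  interpret prob_space M by (rule assms(1))
  interpret filtration "space M" F by (rule assms(2))
  define Pe where "Pe i x = (e1 i x, e2 i x)" for i x
  have ia: "indep_adapted M F Pe" using assms(4) unfolding Pe_def[abs_def] .
  have Pm: "\<And>n. 1 \<le> n \<Longrightarrow> Pe n \<in> borel_measurable (F n)"
    and Pi: "\<And>n. 1 \<le> n \<Longrightarrow> indep_set (sets (F (n - 1))) {Pe n -` A \<inter> space M |A. A \<in> sets borel}"
    using ia unfolding indep_adapted_def by auto
  have ws: "wsetup M (\<lambda>j. F (n + j)) (\<lambda>j. Pe (n + j)) (\<lambda>x. t x - n)" for n
  proof (rule wsetup.intro[OF assms(1)], rule wsetup_axioms.intro)
    show "space (F (n + j)) = space M" for j by (rule space_F)
    show "sets (F (n + j)) \<subseteq> sets M" for j by (rule assms(3))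
    show "m \<le> k \<Longrightarrow> sets (F (n + m)) \<subseteq> sets (F (n + k))" for m k by (rule sets_F_mono) simp
    show "1 \<le> j \<Longrightarrow> Pe (n + j) \<in> borel_measurable (F (n + j))" for j by (rule Pm) simp
    show "1 \<le> j \<Longrightarrow> indep_set (sets (F (n + (j - 1)))) {Pe (n + j) -` A \<inter> space M |A. A \<in> sets borel}" for j
    proof -
      assume j: "1 \<le> j"
      then have "n + (j - 1) = n + j - 1" by simp
      then show ?thesis using Pi[of "n + j"] j by simp
    qed
    show "stopping_time (\<lambda>j. F (n + j)) (\<lambda>x. t x - n)"
      unfolding stopping_time_def
    proof
      fix k
      have "Measurable.pred (F (n + k)) (\<lambda>x. t x \<le> n + k)" by (rule stopping_timeD[OF assms(11)])
      moreover have "(\<lambda>x. t x - n \<le> k) = (\<lambda>x. t x \<le> n + k)" by auto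
      ultimately show "Measurable.pred (F (n + k)) (\<lambda>x. t x - n \<le> k)" by simp
    qed
  qed
  have ws0: "wsetup M F Pe t" using ws[of 0] by simp
  have PeM: "Pe j \<in> borel_measurable M" if "1 \<le> j" for j
    using wsetup.meas_GM[OF ws0 Pm[OF that]] .
  have mom: "integrable M (\<lambda>x. f (Pe j x)) = integrable M (\<lambda>x. f (Pe 1 x)) \<and>
      (\<integral>x. f (Pe j x) \<partial>M) = (\<integral>x. f (Pe 1 x) \<partial>M)"
    if j: "1 \<le> j" and f: "f \<in> borel_measurable borel" for j and f :: "real \<times> real \<Rightarrow> real"
  proof -
    have d: "distr M borel (Pe j) = distr M borel (Pe 1)" using assms(6)[OF j] unfolding Pe_def[abs_def] by simp
    show ?thesis
      using integrable_distr_eq[OF PeM[OF j] f] integrable_distr_eq[OF PeM[of 1] f]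
        integral_distr[OF PeM[OF j] f] integral_distr[OF PeM[of 1] f] d by simp
  qed
  have Gi: "integrable M (\<lambda>x. f (Pe j x))" if "1 \<le> j" "f \<in> borel_measurable borel" "integrable M (\<lambda>x. f (Pe 1 x))" for j and f :: "real \<times> real \<Rightarrow> real"
    using mom[OF that(1,2)] that(3) by simp
  have Ge: "(\<integral>x. f (Pe j x) \<partial>M) = (\<integral>x. f (Pe 1 x) \<partial>M)" if "1 \<le> j" "f \<in> borel_measurable borel" for j and f :: "real \<times> real \<Rightarrow> real"
    using mom[OF that(1,2)] by simp
  have e1m: "e1 1 \<in> borel_measurable M" using assms(7) by simp
  have e2m: "e2 1 \<in> borel_measurable M" using assms(8) by simp
  have b1: "integrable M (\<lambda>x. fst (Pe 1 x))" using assms(7) by (simp add: Pe_def)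
  have b2: "integrable M (\<lambda>x. snd (Pe 1 x))" using assms(8) by (simp add: Pe_def)
  have b1p: "integrable M (\<lambda>x. p15 (fst (Pe 1 x)))"
  proof -
    have "(\<lambda>x. \<bar>e1 1 x\<bar> powr (3/2)) = (\<lambda>x. p15 (e1 1 x))" by (simp add: powr32 p15_def)
    then show ?thesis using assms(12) by (simp add: Pe_def)
  qed
  have b23: "integrable M (\<lambda>x. \<bar>snd (Pe 1 x)\<bar>^3)" using assms(13) by (simp add: Pe_def)
  have b22: "integrable M (\<lambda>x. (snd (Pe 1 x))^2)"
  proof (rule Bochner_Integration.integrable_bound[where f="\<lambda>x. 1 + \<bar>snd (Pe 1 x)\<bar>^3"])
    show "integrable M (\<lambda>x. 1 + \<bar>snd (Pe 1 x)\<bar>^3)" using b23 by simp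
    show "(\<lambda>x. (snd (Pe 1 x))^2) \<in> borel_measurable M" using e2m by (simp add: Pe_def)
  qed (use sq_le_cube in auto)
  have b12: "integrable M (\<lambda>x. fst (Pe 1 x) * snd (Pe 1 x))"
  proof (rule Bochner_Integration.integrable_bound[where f="\<lambda>x. p15 (fst (Pe 1 x)) + \<bar>snd (Pe 1 x)\<bar>^3"])
    show "integrable M (\<lambda>x. p15 (fst (Pe 1 x)) + \<bar>snd (Pe 1 x)\<bar>^3)" using b1p b23 by simp
    show "(\<lambda>x. fst (Pe 1 x) * snd (Pe 1 x)) \<in> borel_measurable M" using e1m e2m by (simp add: Pe_def)
    show "AE x in M. norm (fst (Pe 1 x) * snd (Pe 1 x)) \<le> norm (p15 (fst (Pe 1 x)) + \<bar>snd (Pe 1 x)\<bar>^3)"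
      by (rule AE_I2) (use young_11 p15_nonneg in \<open>simp add: abs_of_nonneg add_nonneg_nonneg\<close>)
  qed
  have bm1: "(\<integral>x. fst (Pe 1 x) \<partial>M) = 0" using assms(9) by (simp add: Pe_def)
  have bm2: "(\<integral>x. snd (Pe 1 x) \<partial>M) = 0" using assms(10) by (simp add: Pe_def)
  define c1 where "c1 = (\<integral>x. p15 (fst (Pe 1 x)) \<partial>M)"
  define vv where "vv = (\<integral>x. (snd (Pe 1 x))^2 \<partial>M)"
  define c3 where "c3 = (\<integral>x. \<bar>snd (Pe 1 x)\<bar>^3 \<partial>M)"
  define mu where "mu = (\<integral>x. fst (Pe 1 x) * snd (Pe 1 x) \<partial>M)"
  define KB where "KB = 2 * (6 * vv + 3 * c3 + 3 * vv * (6 * vv + 1)^2)"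
  have c10: "0 \<le> c1" unfolding c1_def by (rule integral_nonneg_AE) simp
  have fstm[measurable]: "(fst :: real \<times> real \<Rightarrow> real) \<in> borel_measurable borel"
    by (rule borel_measurable_continuous_onI) (intro continuous_intros)
  have sndm[measurable]: "(snd :: real \<times> real \<Rightarrow> real) \<in> borel_measurable borel"
    by (rule borel_measurable_continuous_onI) (intro continuous_intros)
  have p1m: "(\<lambda>p::real\<times>real. p15 (fst p)) \<in> borel_measurable borel"
    using measurable_compose[OF fstm p15_meas] .
  have sq: "(\<lambda>y::real. y^2) \<in> borel_measurable borel" by measurable
  have cu: "(\<lambda>y::real. \<bar>y\<bar>^3) \<in> borel_measurable borel" by measurable
  have s2m: "(\<lambda>p::real\<times>real. (snd p)^2) \<in> borel_measurable borel"
    using measurable_compose[OF sndm sq] .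
  have s3m: "(\<lambda>p::real\<times>real. \<bar>snd p\<bar>^3) \<in> borel_measurable borel"
    using measurable_compose[OF sndm cu] .
  have pm: "(\<lambda>p::real\<times>real. fst p * snd p) \<in> borel_measurable borel"
    using borel_measurable_times[OF fstm sndm] .
  have H1i: "integrable M (\<lambda>x. fst (Pe (n + j) x))" if "1 \<le> j" for n j using Gi[OF _ fstm b1] that by simp
  have H1m: "(\<integral>x. fst (Pe (n + j) x) \<partial>M) = 0" if "1 \<le> j" for n j using Ge[OF _ fstm, of "n+j"] that bm1 by simp
  have H1pi: "integrable M (\<lambda>x. p15 (fst (Pe (n + j) x)))" if "1 \<le> j" for n j using Gi[OF _ p1m b1p] that by simp
  have H1pm: "(\<integral>x. p15 (fst (Pe (n + j) x)) \<partial>M) \<le> c1" if "1 \<le> j" for n j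
    using Ge[OF _ p1m, of "n+j"] that unfolding c1_def by simp
  have H2i: "integrable M (\<lambda>x. snd (Pe (n + j) x))" if "1 \<le> j" for n j using Gi[OF _ sndm b2] that by simp
  have H2m: "(\<integral>x. snd (Pe (n + j) x) \<partial>M) = 0" if "1 \<le> j" for n j using Ge[OF _ sndm, of "n+j"] that bm2 by simp
  have H22i: "integrable M (\<lambda>x. (snd (Pe (n + j) x))^2)" if "1 \<le> j" for n j using Gi[OF _ s2m b22] that by simp
  have H22m: "(\<integral>x. (snd (Pe (n + j) x))^2 \<partial>M) = vv" if "1 \<le> j" for n j
    using Ge[OF _ s2m, of "n+j"] that unfolding vv_def by simp
  have H23i: "integrable M (\<lambda>x. \<bar>snd (Pe (n + j) x)\<bar>^3)" if "1 \<le> j" for n j using Gi[OF _ s3m b23] that by simp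
  have H23m: "(\<integral>x. \<bar>snd (Pe (n + j) x)\<bar>^3 \<partial>M) \<le> c3" if "1 \<le> j" for n j
    using Ge[OF _ s3m, of "n+j"] that unfolding c3_def by simp
  have H12i: "integrable M (\<lambda>x. fst (Pe j x) * snd (Pe j x))" if "1 \<le> j" for j using Gi[OF _ pm b12] that by simp
  have H12m: "(\<integral>x. fst (Pe j x) * snd (Pe j x) \<partial>M) = mu" if "1 \<le> j" for j
    using Ge[OF _ pm, of j] that unfolding mu_def by simp
  interpret W0: wsetup M F Pe t by (rule ws0)
  have H1i0: "integrable M (\<lambda>x. fst (Pe j x))" if "1 \<le> j" for j using H1i[of j 0] that by simp
  have H1m0: "(\<integral>x. fst (Pe j x) \<partial>M) = 0" if "1 \<le> j" for j using H1m[of j 0] that by simp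
  have H1pi0: "integrable M (\<lambda>x. p15 (fst (Pe j x)))" if "1 \<le> j" for j using H1pi[of j 0] that by simp
  have H1pm0: "(\<integral>x. p15 (fst (Pe j x)) \<partial>M) \<le> c1" if "1 \<le> j" for j using H1pm[of j 0] that by simp
  have H2i0: "integrable M (\<lambda>x. snd (Pe j x))" if "1 \<le> j" for j using H2i[of j 0] that by simp
  have H2m0: "(\<integral>x. snd (Pe j x) \<partial>M) = 0" if "1 \<le> j" for j using H2m[of j 0] that by simp
  have H22i0: "integrable M (\<lambda>x. (snd (Pe j x))^2)" if "1 \<le> j" for j using H22i[of j 0] that by simp
  have H22m0: "(\<integral>x. (snd (Pe j x))^2 \<partial>M) = vv" if "1 \<le> j" for j using H22m[of j 0] that by simp
  have H23i0: "integrable M (\<lambda>x. \<bar>snd (Pe j x)\<bar>^3)" if "1 \<le> j" for j using H23i[of j 0] that by simp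
  have H23m0: "(\<integral>x. \<bar>snd (Pe j x)\<bar>^3 \<partial>M) \<le> c3" if "1 \<le> j" for j using H23m[of j 0] that by simp
  have tm: "(\<lambda>x. real (t x)) \<in> borel_measurable M" using W0.tau_meas by measurable
  have Ti: "integrable M (\<lambda>x. real (t x) * sqrt (real (t x)))"
  proof -
    have "(\<lambda>x. real (t x) powr (3/2)) = (\<lambda>x. real (t x) * sqrt (real (t x)))" by (simp add: powr32)
    then show ?thesis using assms(14) by simp
  qed
  have ti: "integrable M (\<lambda>x. real (t x))"
    by (rule Bochner_Integration.integrable_bound[OF Ti tm]) (use nat_le_msqrt in \<open>auto intro: AE_I2\<close>)
  have tin: "integrable M (\<lambda>x. real (t x - n))" for n
  proof (rule Bochner_Integration.integrable_bound[OF ti])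
    show "(\<lambda>x. real (t x - n)) \<in> borel_measurable M" using W0.tau_meas by measurable
  qed (auto intro: AE_I2)
  have Tin: "integrable M (\<lambda>x. real (t x - n) * sqrt (real (t x - n)))" for n
  proof (rule Bochner_Integration.integrable_bound[OF Ti])
    show "(\<lambda>x. real (t x - n) * sqrt (real (t x - n))) \<in> borel_measurable M" using W0.tau_meas by measurable
  qed (auto intro!: AE_I2 mult_mono)
  define Z1 where "Z1 x = psum (\<lambda>j x. fst (Pe j x)) (t x) x" for x
  define Z2 where "Z2 x = psum (\<lambda>j x. snd (Pe j x)) (t x) x" for x
  define S1 where "S1 n x = psum (\<lambda>j x. fst (Pe j x)) (min (t x) n) x" for n x
  define S2 where "S2 n x = psum (\<lambda>j x. snd (Pe j x)) (min (t x) n) x" for n x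
  define D1 where "D1 n x = psum (\<lambda>j x. fst (Pe (n + j) x)) (t x - n) x" for n x
  define D2 where "D2 n x = psum (\<lambda>j x. snd (Pe (n + j) x)) (t x - n) x" for n x
  have sp1: "Z1 x = S1 n x + D1 n x" for n x
    unfolding Z1_def S1_def D1_def by (rule psum_split)
  have sp2: "Z2 x = S2 n x + D2 n x" for n x
    unfolding Z2_def S2_def D2_def by (rule psum_split)
  have S1e: "W0.S fst n = S1 n" for n by (simp add: fun_eq_iff W0.S_psum S1_def)
  have S2e: "W0.S snd n = S2 n" for n by (simp add: fun_eq_iff W0.S_psum S2_def)
  have Z1m: "Z1 \<in> borel_measurable M" unfolding Z1_def[abs_def] using W0.psum_meas[OF fstm] by simp
  have Z2m: "Z2 \<in> borel_measurable M" unfolding Z2_def[abs_def] using W0.psum_meas[OF sndm] by simp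
  have S1m: "S1 n \<in> borel_measurable M" for n using W0.S_measM[OF fstm, of n] S1e by simp
  have S2m: "S2 n \<in> borel_measurable M" for n using W0.S_measM[OF sndm, of n] S2e by simp
  have D1m: "D1 n \<in> borel_measurable M" for n
    unfolding D1_def[abs_def] using wsetup.psum_meas[OF ws[of n] fstm] by simp
  have D2m: "D2 n \<in> borel_measurable M" for n
    unfolding D2_def[abs_def] using wsetup.psum_meas[OF ws[of n] sndm] by simp
  note AZ1 = W0.A_inf[OF fstm H1i0 H1m0 H1pi0 H1pm0 ti, folded Z1_def]
  note BZ2 = W0.B_inf[OF sndm H2i0 H2m0 H22i0 H22m0 H23i0 H23m0 Ti, folded Z2_def KB_def]
  have AS1: "integrable M (\<lambda>x. p15 (S1 n x)) \<and> (\<integral>x. p15 (S1 n x) \<partial>M) \<le> 2 * c1 * (\<integral>x. real (min (t x) n) \<partial>M)" for n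
    using W0.A_fin[OF fstm H1i0 H1m0 H1pi0 H1pm0, of n] S1e by simp
  have BS2: "integrable M (\<lambda>x. \<bar>S2 n x\<bar>^3)" for n
    using W0.B_int[OF sndm H23i0, of n] S2e by simp
  have AD1: "integrable M (\<lambda>x. p15 (D1 n x)) \<and> (\<integral>x. p15 (D1 n x) \<partial>M) \<le> 2 * c1 * (\<integral>x. real (t x - n) \<partial>M)" for n
    using wsetup.A_inf[OF ws[of n] fstm H1i H1m H1pi H1pm tin] unfolding D1_def by simp
  have BD2: "integrable M (\<lambda>x. \<bar>D2 n x\<bar>^3) \<and> (\<integral>x. \<bar>D2 n x\<bar>^3 \<partial>M) \<le> KB * (\<integral>x. real (t x - n) * sqrt (real (t x - n)) \<partial>M)" for n
    using wsetup.B_inf[OF ws[of n] sndm H2i H2m H22i H22m H23i H23m Tin] unfolding D2_def KB_def by simp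
  have prodint: "integrable M (\<lambda>x. f x * g x)"
    if "f \<in> borel_measurable M" "g \<in> borel_measurable M" "integrable M (\<lambda>x. p15 (f x))" "integrable M (\<lambda>x. \<bar>g x\<bar>^3)" for f g
  proof (rule Bochner_Integration.integrable_bound[where f="\<lambda>x. p15 (f x) + \<bar>g x\<bar>^3"])
    show "integrable M (\<lambda>x. p15 (f x) + \<bar>g x\<bar>^3)" using that by simp
    show "(\<lambda>x. f x * g x) \<in> borel_measurable M" using that by measurable
    show "AE x in M. norm (f x * g x) \<le> norm (p15 (f x) + \<bar>g x\<bar>^3)"
      by (rule AE_I2) (use young_11 p15_nonneg in \<open>simp add: abs_of_nonneg add_nonneg_nonneg\<close>)
  qed
  have ybound: "\<bar>\<integral>x. f x * g x \<partial>M\<bar> \<le> d * (\<integral>x. p15 (f x) \<partial>M) + (\<integral>x. \<bar>g x\<bar>^3 \<partial>M) / d^2"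
    if "d > 0" "f \<in> borel_measurable M" "g \<in> borel_measurable M" "integrable M (\<lambda>x. p15 (f x))" "integrable M (\<lambda>x. \<bar>g x\<bar>^3)" for f g d
  proof -
    have "\<bar>\<integral>x. f x * g x \<partial>M\<bar> \<le> (\<integral>x. \<bar>f x * g x\<bar> \<partial>M)" by (rule integral_abs_bound)
    also have "\<dots> \<le> (\<integral>x. d * p15 (f x) + \<bar>g x\<bar>^3 / d^2 \<partial>M)"
    proof (rule integral_mono)
      show "integrable M (\<lambda>x. \<bar>f x * g x\<bar>)" using prodint[OF that(2-5)] by simp
      show "integrable M (\<lambda>x. d * p15 (f x) + \<bar>g x\<bar>^3 / d^2)" using that by simp
      show "\<bar>f x * g x\<bar> \<le> d * p15 (f x) + \<bar>g x\<bar>^3 / d^2" for x by (rule young_pq) (rule that(1))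
    qed
    also have "\<dots> = d * (\<integral>x. p15 (f x) \<partial>M) + (\<integral>x. \<bar>g x\<bar>^3 \<partial>M) / d^2" using that by simp
    finally show ?thesis .
  qed
  define a where "a n = 2 * c1 * (\<integral>x. real (t x - n) \<partial>M)" for n
  define b where "b n = KB * (\<integral>x. real (t x - n) * sqrt (real (t x - n)) \<partial>M)" for n
  define B1 where "B1 = (\<integral>x. \<bar>Z2 x\<bar>^3 \<partial>M)"
  define A2 where "A2 = 2 * c1 * (\<integral>x. real (t x) \<partial>M)"
  define xs where "xs n = (\<integral>x. Z1 x * Z2 x \<partial>M) - (\<integral>x. S1 n x * S2 n x \<partial>M)" for n
  have B10: "0 \<le> B1" unfolding B1_def by (rule integral_nonneg_AE) simp
  have A20: "0 \<le> A2" unfolding A2_def using c10 by (simp add: integral_nonneg_AE)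
  have xbd: "\<bar>xs n\<bar> \<le> d1 * a n + B1 / d1^2 + d2 * A2 + b n / d2^2" if d: "d1 > 0" "d2 > 0" for n d1 d2
  proof -
    have iZ: "integrable M (\<lambda>x. Z1 x * Z2 x)"
    proof -
      have "(\<lambda>x. Z1 x * Z2 x) = (\<lambda>x. D1 n x * Z2 x + S1 n x * Z2 x)" by (simp add: fun_eq_iff sp1[of _ n] algebra_simps)
      moreover have "integrable M (\<lambda>x. D1 n x * Z2 x)" using prodint[OF D1m Z2m] AD1 BZ2 by simp
      moreover have "integrable M (\<lambda>x. S1 n x * Z2 x)" using prodint[OF S1m Z2m] AS1 BZ2 by simp
      ultimately show ?thesis by simp
    qed
    have i1: "integrable M (\<lambda>x. D1 n x * Z2 x)" using prodint[OF D1m Z2m] AD1 BZ2 by simp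
    have i2: "integrable M (\<lambda>x. S1 n x * D2 n x)" using prodint[OF S1m D2m] AS1 BD2 by simp
    have i3: "integrable M (\<lambda>x. S1 n x * S2 n x)" using prodint[OF S1m S2m] AS1 BS2 by simp
    have eq: "xs n = (\<integral>x. D1 n x * Z2 x \<partial>M) + (\<integral>x. S1 n x * D2 n x \<partial>M)"
    proof -
      have "(\<lambda>x. Z1 x * Z2 x) = (\<lambda>x. (D1 n x * Z2 x + S1 n x * D2 n x) + S1 n x * S2 n x)"
        by (simp add: fun_eq_iff sp1[of _ n] sp2[of _ n] algebra_simps)
      then have "(\<integral>x. Z1 x * Z2 x \<partial>M) = (\<integral>x. D1 n x * Z2 x \<partial>M) + (\<integral>x. S1 n x * D2 n x \<partial>M) + (\<integral>x. S1 n x * S2 n x \<partial>M)"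
        using i1 i2 i3 by simp
      then show ?thesis unfolding xs_def by simp
    qed
    have y1: "\<bar>\<integral>x. D1 n x * Z2 x \<partial>M\<bar> \<le> d1 * a n + B1 / d1^2"
    proof -
      have "\<bar>\<integral>x. D1 n x * Z2 x \<partial>M\<bar> \<le> d1 * (\<integral>x. p15 (D1 n x) \<partial>M) + B1 / d1^2"
        unfolding B1_def using ybound[OF d(1) D1m Z2m] AD1 BZ2 by simp
      moreover have "d1 * (\<integral>x. p15 (D1 n x) \<partial>M) \<le> d1 * a n"
        unfolding a_def using AD1 d(1) by (intro mult_left_mono) auto
      ultimately show ?thesis by linarith
    qed
    have y2: "\<bar>\<integral>x. S1 n x * D2 n x \<partial>M\<bar> \<le> d2 * A2 + b n / d2^2"
    proof -
      have "\<bar>\<integral>x. S1 n x * D2 n x \<partial>M\<bar> \<le> d2 * (\<integral>x. p15 (S1 n x) \<partial>M) + (\<integral>x. \<bar>D2 n x\<bar>^3 \<partial>M) / d2^2"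
        using ybound[OF d(2) S1m D2m] AS1 BD2 by simp
      moreover have "(\<integral>x. p15 (S1 n x) \<partial>M) \<le> A2"
      proof -
        have "(\<integral>x. real (min (t x) n) \<partial>M) \<le> (\<integral>x. real (t x) \<partial>M)"
          by (rule integral_mono[OF W0.min_int ti]) simp
        then have "2 * c1 * (\<integral>x. real (min (t x) n) \<partial>M) \<le> A2"
          unfolding A2_def using c10 by (intro mult_left_mono) auto
        then show ?thesis using AS1[of n] by linarith
      qed
      moreover have "(\<integral>x. \<bar>D2 n x\<bar>^3 \<partial>M) / d2^2 \<le> b n / d2^2"
        unfolding b_def using BD2 d(2) by (intro divide_right_mono) auto
      ultimately show ?thesis using d(2) by (smt (verit) mult_left_mono)
    qed
    show ?thesis unfolding eq using y1 y2 abs_triangle_ineq[of "\<integral>x. D1 n x * Z2 x \<partial>M" "\<integral>x. S1 n x * D2 n x \<partial>M"]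
      by linarith
  qed
  have alim: "a \<longlonglongrightarrow> 0"
  proof -
    have "(\<lambda>n. \<integral>x. real (t x - n) \<partial>M) \<longlonglongrightarrow> (\<integral>x. 0 \<partial>M)"
    proof (rule integral_dominated_convergence[OF _ _ ti])
      show "(\<lambda>x. 0::real) \<in> borel_measurable M" by simp
      show "(\<lambda>x. real (t x - n)) \<in> borel_measurable M" for n using W0.tau_meas by measurable
      show "AE x in M. (\<lambda>n. real (t x - n)) \<longlonglongrightarrow> 0"
      proof (rule AE_I2)
        fix x show "(\<lambda>n. real (t x - n)) \<longlonglongrightarrow> 0"
          by (rule tendsto_eventually) (auto simp: eventually_sequentially intro!: exI[of _ "t x"])
      qed
      show "AE x in M. norm (real (t x - n)) \<le> real (t x)" for n by (rule AE_I2) simp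
    qed
    then have "(\<lambda>n. 2 * c1 * (\<integral>x. real (t x - n) \<partial>M)) \<longlonglongrightarrow> 0"
      by (intro tendsto_mult_right_zero) simp
    then show ?thesis unfolding a_def[abs_def] .
  qed
  have blim: "b \<longlonglongrightarrow> 0"
  proof -
    have "(\<lambda>n. \<integral>x. real (t x - n) * sqrt (real (t x - n)) \<partial>M) \<longlonglongrightarrow> (\<integral>x. 0 \<partial>M)"
    proof (rule integral_dominated_convergence[OF _ _ Ti])
      show "(\<lambda>x. 0::real) \<in> borel_measurable M" by simp
      show "(\<lambda>x. real (t x - n) * sqrt (real (t x - n))) \<in> borel_measurable M" for n using W0.tau_meas by measurable
      show "AE x in M. (\<lambda>n. real (t x - n) * sqrt (real (t x - n))) \<longlonglongrightarrow> 0"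
      proof (rule AE_I2)
        fix x show "(\<lambda>n. real (t x - n) * sqrt (real (t x - n))) \<longlonglongrightarrow> 0"
          by (rule tendsto_eventually) (auto simp: eventually_sequentially intro!: exI[of _ "t x"])
      qed
      show "AE x in M. norm (real (t x - n) * sqrt (real (t x - n))) \<le> real (t x) * sqrt (real (t x))" for n
        by (rule AE_I2) (auto intro!: mult_mono)
    qed
    then have "(\<lambda>n. KB * (\<integral>x. real (t x - n) * sqrt (real (t x - n)) \<partial>M)) \<longlonglongrightarrow> 0"
      by (intro tendsto_mult_right_zero) simp
    then show ?thesis unfolding b_def[abs_def] .
  qed
  have xlim: "xs \<longlonglongrightarrow> 0" by (rule conv_aux[OF xbd alim blim B10 A20])
  have lim1: "(\<lambda>n. \<integral>x. S1 n x * S2 n x \<partial>M) \<longlonglongrightarrow> (\<integral>x. Z1 x * Z2 x \<partial>M)"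
  proof -
    have "(\<lambda>n. (\<integral>x. Z1 x * Z2 x \<partial>M) - xs n) \<longlonglongrightarrow> (\<integral>x. Z1 x * Z2 x \<partial>M) - 0"
      by (intro tendsto_diff tendsto_const xlim)
    then show ?thesis unfolding xs_def by simp
  qed
  have S1i: "integrable M (W0.S fst k)" for k using W0.S_int_p15[OF _ fstm] AS1[of k] S1e by simp
  have S2i: "integrable M (W0.S snd k)" for k
  proof (rule Bochner_Integration.integrable_bound[where f="\<lambda>x. 1 + \<bar>S2 k x\<bar>^3"])
    show "integrable M (\<lambda>x. 1 + \<bar>S2 k x\<bar>^3)" using BS2 by simp
    show "W0.S snd k \<in> borel_measurable M" using W0.S_measM[OF sndm] .
  qed (use abs_le_cube S2e in auto)
  have Si: "integrable M (\<lambda>x. W0.S fst k x * W0.S snd k x)" for k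
    using prodint[OF S1m S2m] AS1 BS2 S1e S2e by simp
  have pf: "(\<integral>x. S1 n x * S2 n x \<partial>M) = (\<integral>x. real (min (t x) n) \<partial>M) * mu" for n
    using W0.prod_fin[OF fstm sndm H1i0 H1m0 H2i0 H2m0 H12i H12m S1i S2i Si, of n] S1e S2e by simp
  have lim2: "(\<lambda>n. \<integral>x. S1 n x * S2 n x \<partial>M) \<longlonglongrightarrow> (\<integral>x. real (t x) \<partial>M) * mu"
  proof -
    have "(\<lambda>n. \<integral>x. real (min (t x) n) \<partial>M) \<longlonglongrightarrow> (\<integral>x. real (t x) \<partial>M)"
    proof (rule integral_dominated_convergence[OF tm _ ti])
      show "(\<lambda>x. real (min (t x) n)) \<in> borel_measurable M" for n using W0.min_meas .
      show "AE x in M. (\<lambda>n. real (min (t x) n)) \<longlonglongrightarrow> real (t x)"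
      proof (rule AE_I2)
        fix x show "(\<lambda>n. real (min (t x) n)) \<longlonglongrightarrow> real (t x)"
          by (rule tendsto_eventually) (auto simp: eventually_sequentially intro!: exI[of _ "t x"])
      qed
      show "AE x in M. norm (real (min (t x) n)) \<le> real (t x)" for n by (rule AE_I2) simp
    qed
    then show ?thesis unfolding pf by (intro tendsto_mult_right tendsto_intros)
  qed
  have final: "(\<integral>x. Z1 x * Z2 x \<partial>M) = (\<integral>x. real (t x) \<partial>M) * mu"
    using LIMSEQ_unique[OF lim1 lim2] .
  have fe1: "(\<lambda>j x. fst (Pe j x)) = e1" by (intro ext) (simp add: Pe_def)
  have fe2: "(\<lambda>j x. snd (Pe j x)) = e2" by (intro ext) (simp add: Pe_def)
  have mue: "mu = (\<integral>x. e1 1 x * e2 1 x \<partial>M)" unfolding mu_def by (simp add: Pe_def)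
  show ?thesis using final unfolding Z1_def Z2_def fe1 fe2 mue .
qed


end
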